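(* Let $A_j$ be a symmetric $2N_j\times2N_j$ matrix with $\sigma(J_{2N_j}A_j)=\{\pm\beta_0 i\}$, $\beta_0>0$. Then $\mathrm{m}^-\big(T_1^{N_j}(\lambda A_j)\big)=2N_j$ for all $\lambda\in[0,1/\beta_0)$, and $\mathrm{m}^-\big(T_1^{N_j}(\lambda A_j)\big)=2\,\mathrm{m}^-(-A_j)$ for all $\lambda>1/\beta_0$.
   Context: $J_{2k}=\begin{pmatrix}0&I_k\\-I_k&0\end{pmatrix}$; $T_1^{k}(\lambda B)=\begin{pmatrix}-\lambda B&J_{2k}\\-J_{2k}&-\lambda B\end{pmatrix}$; $\mathrm{m}^-$ is the number of negative eigenvalues of a symmetric matrix. *)

theory Defs
  imports "Jordan_Normal_Form.Spectral_Radius"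
begin

definition J_mat :: "nat \<Rightarrow> real mat" where
  "J_mat k = four_block_mat (0\<^sub>m k k) (1\<^sub>m k) (- (1\<^sub>m k)) (0\<^sub>m k k)"

definition T1 :: "nat \<Rightarrow> real mat \<Rightarrow> real mat" where
  "T1 k B = four_block_mat (- B) (J_mat k) (- (J_mat k)) (- B)"

definition neg_index :: "real mat \<Rightarrow> nat" where
  "neg_index M = (\<Sum>x\<in>{x. x < 0 \<and> eigenvalue M x}. order x (char_poly M))"

end

theory Submission
  imports Defs "Jordan_Normal_Form.Schur_Decomposition"
begin


lemma sym_real_eigenvalue:
  fixes M :: "real mat"
  assumes M: "M \<in> carrier_mat n n" and sym: "M\<^sup>T = M" and n: "n > 0"
  shows "\<exists>e v. v \<in> carrier_vec n \<and> v \<noteq> 0\<^sub>v n \<and> M *\<^sub>v v = e \<cdot>\<^sub>v v"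
proof -
  define Mc where "Mc = map_mat complex_of_real M"
  have Mc: "Mc \<in> carrier_mat n n" using M unfolding Mc_def by auto
  from spectrum_non_empty[OF Mc n] obtain ec where "eigenvalue Mc ec"
    unfolding spectrum_def by auto
  then obtain v where v: "v \<in> carrier_vec n" "v \<noteq> 0\<^sub>v n" "Mc *\<^sub>v v = ec \<cdot>\<^sub>v v"
    unfolding eigenvalue_def eigenvector_def using Mc by auto
  have symij: "M $$ (i,j) = M $$ (j,i)" if "i < n" "j < n" for i j
    using arg_cong[OF sym, of "\<lambda>X. X $$ (j,i)"] that M by auto
  have Mv: "(\<Sum>j<n. complex_of_real (M $$ (i,j)) * v $ j) = ec * v $ i" if i: "i < n" for i
  proof -
    have "(Mc *\<^sub>v v) $ i = ec * v $ i" using v(3) i v(1) by auto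
    moreover have "(Mc *\<^sub>v v) $ i = (\<Sum>j<n. complex_of_real (M $$ (i,j)) * v $ j)"
      using i M v(1) unfolding Mc_def
      by (auto simp: scalar_prod_def row_def lessThan_atLeast0 intro!: sum.cong)
    ultimately show ?thesis by simp
  qed
  define s where "s = (\<Sum>i<n. cnj (v $ i) * (\<Sum>j<n. complex_of_real (M $$ (i,j)) * v $ j))"
  have s1: "s = ec * (\<Sum>i<n. cnj (v $ i) * v $ i)"
  proof -
    have "s = (\<Sum>i<n. cnj (v $ i) * (ec * v $ i))" unfolding s_def using Mv by (auto intro!: sum.cong)
    thus ?thesis by (simp add: sum_distrib_left mult_ac)
  qed
  have "cnj s = (\<Sum>i<n. v $ i * (\<Sum>j<n. complex_of_real (M $$ (i,j)) * cnj (v $ j)))"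
    unfolding s_def by (simp add: cnj_sum mult_ac)
  also have "\<dots> = (\<Sum>i<n. \<Sum>j<n. v $ i * complex_of_real (M $$ (i,j)) * cnj (v $ j))"
    by (simp add: sum_distrib_left mult_ac)
  also have "\<dots> = (\<Sum>j<n. \<Sum>i<n. v $ i * complex_of_real (M $$ (i,j)) * cnj (v $ j))"
    by (rule sum.swap)
  also have "\<dots> = (\<Sum>j<n. \<Sum>i<n. cnj (v $ j) * complex_of_real (M $$ (j,i)) * v $ i)"
    by (intro sum.cong refl, simp add: symij mult_ac)
  also have "\<dots> = s" unfolding s_def by (simp add: sum_distrib_left mult_ac)
  finally have cs: "cnj s = s" .
  define r where "r = (\<Sum>i<n. (Re (v $ i))^2 + (Im (v $ i))^2)"
  have r: "(\<Sum>i<n. cnj (v $ i) * v $ i) = complex_of_real r"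
    unfolding r_def of_real_sum by (intro sum.cong refl) (simp add: complex_mult_cnj mult.commute)
  have "\<exists>i<n. v $ i \<noteq> 0"
  proof (rule ccontr)
    assume "\<not> ?thesis"
    hence "v = 0\<^sub>v n" using v(1) by (intro eq_vecI) auto
    with v(2) show False by simp
  qed
  then obtain i where i: "i < n" "v $ i \<noteq> 0" by auto
  have "Re (v $ i) \<noteq> 0 \<or> Im (v $ i) \<noteq> 0" using i(2) complex_eqI by (metis zero_complex.simps)
  hence pos: "0 < (Re (v $ i))^2 + (Im (v $ i))^2"
    by (metis add_nonneg_pos add_pos_nonneg zero_le_power2 zero_less_power2)
  have "r > 0" unfolding r_def
    by (rule sum_pos2[of _ i], insert i pos, auto)
  have "cnj (ec * complex_of_real r) = ec * complex_of_real r" using cs unfolding s1 r .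
  hence "cnj ec * complex_of_real r = ec * complex_of_real r" by simp
  hence "cnj ec = ec" using \<open>r > 0\<close> by simp
  hence "Im ec = 0" by (simp add: complex_eq_iff)
  hence ecr: "ec = complex_of_real (Re ec)" by (simp add: complex_eq_iff)
  have "poly (char_poly Mc) ec = 0" using \<open>eigenvalue Mc ec\<close> eigenvalue_root_char_poly[OF Mc] by simp
  also have "char_poly Mc = map_poly complex_of_real (char_poly M)"
    unfolding Mc_def by (rule of_real_hom.char_poly_hom[OF M])
  finally have "poly (char_poly M) (Re ec) = 0" by (subst (asm) ecr) simp
  hence "eigenvalue M (Re ec)" using eigenvalue_root_char_poly[OF M] by auto
  thus ?thesis unfolding eigenvalue_def eigenvector_def using M by auto
qed

lemma conj_real_vec[simp]: "conjugate (w :: real vec) = w"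
  by (rule eq_vecI) (auto simp: conjugate_vec_def)

lemma orthonormal_completion:
  fixes v :: "real vec"
  assumes v: "v \<in> carrier_vec n" and v1: "v \<bullet> v = 1"
  shows "\<exists>W \<in> carrier_mat n n. col W 0 = v \<and> W\<^sup>T * W = 1\<^sub>m n"
proof -
  have v0: "v \<noteq> 0\<^sub>v n" using v1 by auto
  interpret cof_vec_space n "TYPE(real)" .
  define b where "b = basis_completion v"
  define ws where "ws = gram_schmidt n b"
  from basis_completion[OF v v0, folded b_def]
  have dist_b: "distinct b" 
    and indep: "\<not> lin_dep (set b)" and b: "set b \<subseteq> carrier_vec n" and hdb: "hd b = v" 
    and len_b: "length b = n" by auto
  have n: "n > 0" using v0 v by (cases n) auto
  from hdb len_b n obtain vs where bv: "b = v # vs" by (cases b, auto)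
  from gram_schmidt_result[OF b dist_b indep refl, folded ws_def]
  have ws: "set ws \<subseteq> carrier_vec n" "corthogonal ws" "length ws = n" 
    by (auto simp: len_b)
  from gram_schmidt_hd[OF v, of vs, folded bv] have hdws: "hd ws = v" unfolding ws_def .
  define us where "us = map (\<lambda>w. (1 / sqrt (w \<bullet> w)) \<cdot>\<^sub>v w) ws"
  define W where "W = mat_of_cols n us"
  have lus: "length us = n" unfolding us_def using ws by auto
  have W: "W \<in> carrier_mat n n" unfolding W_def using lus by auto
  have wsc: "i < n \<Longrightarrow> ws ! i \<in> carrier_vec n" for i using ws by auto
  have orth: "i < n \<Longrightarrow> j < n \<Longrightarrow> ws ! i \<bullet> ws ! j = 0 \<longleftrightarrow> i \<noteq> j" for i j
    using corthogonalD[OF ws(2), of i j] ws(3) by simp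
  have pos: "i < n \<Longrightarrow> ws ! i \<bullet> ws ! i > 0" for i
    using orth[of i i] conjugate_square_ge_0_vec[of "ws ! i"] by (auto simp: order_le_less)
  have usc: "i < n \<Longrightarrow> us ! i \<in> carrier_vec n" for i using wsc unfolding us_def using ws(3) by auto
  have usd: "i < n \<Longrightarrow> j < n \<Longrightarrow> us ! i \<bullet> us ! j = (if i = j then 1 else 0)" for i j
  proof -
    assume i: "i < n" and j: "j < n"
    have "us ! i \<bullet> us ! j = (1 / sqrt (ws ! i \<bullet> ws ! i)) * (1 / sqrt (ws ! j \<bullet> ws ! j)) * (ws ! i \<bullet> ws ! j)"
      unfolding us_def using i j ws(3) wsc[OF i] wsc[OF j] by simp
    thus ?thesis using orth[OF i j] pos[OF i] 
      by (auto simp: real_sqrt_mult[symmetric])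
  qed
  have col0: "col W 0 = us ! 0" unfolding W_def using lus n usc[of 0] by (intro col_mat_of_cols) auto
  have "us ! 0 = v" unfolding us_def using hdws ws(3) n v1 by (cases ws) auto
  moreover have "W\<^sup>T * W = 1\<^sub>m n"
  proof (rule eq_matI)
    fix i j assume i: "i < dim_row (1\<^sub>m n)" and j: "j < dim_col (1\<^sub>m n)"
    hence "(W\<^sup>T * W) $$ (i,j) = us ! i \<bullet> us ! j" using W lus usc[of i] usc[of j] unfolding W_def by (simp add: col_mat_of_cols)
    thus "(W\<^sup>T * W) $$ (i,j) = 1\<^sub>m n $$ (i,j)" using usd i j by simp
  qed (use W in auto)
  ultimately show ?thesis using W col0 by auto
qed


lemma block_diag_mult:
  assumes "A1 \<in> carrier_mat n1 n1" "A2 \<in> carrier_mat n2 n2" "B1 \<in> carrier_mat n1 n1" "B2 \<in> carrier_mat n2 n2"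
  shows "four_block_mat A1 (0\<^sub>m n1 n2) (0\<^sub>m n2 n1) A2 * four_block_mat B1 (0\<^sub>m n1 n2) (0\<^sub>m n2 n1) B2
    = four_block_mat (A1 * B1) (0\<^sub>m n1 n2) (0\<^sub>m n2 n1) (A2 * B2)"
  by (subst mult_four_block_mat[OF assms(1) _ _ assms(2) assms(3) _ _ assms(4)], insert assms, auto)

lemma block_diag_transpose:
  assumes "A1 \<in> carrier_mat n1 n1" "A2 \<in> carrier_mat n2 n2"
  shows "(four_block_mat A1 (0\<^sub>m n1 n2) (0\<^sub>m n2 n1) A2)\<^sup>T
    = four_block_mat A1\<^sup>T (0\<^sub>m n1 n2) (0\<^sub>m n2 n1) A2\<^sup>T"
  by (subst transpose_four_block_mat[OF assms(1) _ _ assms(2)], auto)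

theorem real_spectral:
  fixes M :: "real mat"
  assumes "M \<in> carrier_mat n n" and "M\<^sup>T = M"
  shows "\<exists>U D. U \<in> carrier_mat n n \<and> U\<^sup>T * U = 1\<^sub>m n \<and> D \<in> carrier_mat n n \<and> diagonal_mat D
     \<and> M = U * D * U\<^sup>T"
  using assms
proof (induct n arbitrary: M)
  case 0
  thus ?case by (intro exI[of _ "1\<^sub>m 0"] exI[of _ M]) (auto simp: diagonal_mat_def)
next
  case (Suc n M)
  note M = Suc(2) and sym = Suc(3)
  from sym_real_eigenvalue[OF M sym] obtain e v where v: "v \<in> carrier_vec (Suc n)" "v \<noteq> 0\<^sub>v (Suc n)"
    "M *\<^sub>v v = e \<cdot>\<^sub>v v" by auto
  define v' where "v' = (1 / sqrt (v \<bullet> v)) \<cdot>\<^sub>v v"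
  have vv: "v \<bullet> v > 0" using v(1,2) conjugate_square_ge_0_vec[of v]
    by (metis conj_real_vec conjugate_square_eq_0_vec order_le_less)
  have v': "v' \<in> carrier_vec (Suc n)" "v' \<bullet> v' = 1" unfolding v'_def using v(1) vv
    by (auto simp: real_sqrt_mult[symmetric])
  have Mv': "M *\<^sub>v v' = e \<cdot>\<^sub>v v'" unfolding v'_def using v M
    by (auto simp: mult_mat_vec smult_smult_assoc mult.commute)
  from orthonormal_completion[OF v'] obtain W where W: "W \<in> carrier_mat (Suc n) (Suc n)"
    "col W 0 = v'" "W\<^sup>T * W = 1\<^sub>m (Suc n)" by auto
  have WWt: "W * W\<^sup>T = 1\<^sub>m (Suc n)" using mat_mult_left_right_inverse[OF _ W(1) W(3)] W(1) by auto
  define M' where "M' = W\<^sup>T * M * W"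
  have M': "M' \<in> carrier_mat (Suc n) (Suc n)" unfolding M'_def using W M by auto
  have sym': "M'\<^sup>T = M'"
  proof -
    have "M'\<^sup>T = W\<^sup>T * (W\<^sup>T * M)\<^sup>T" unfolding M'_def
      by (rule transpose_mult[of _ "Suc n" "Suc n"], insert W M, auto)
    also have "(W\<^sup>T * M)\<^sup>T = M\<^sup>T * W"
      by (subst transpose_mult[of _ "Suc n" "Suc n"], insert W M, auto)
    finally show ?thesis unfolding M'_def sym using W M by simp
  qed
  have col0: "M' $$ (i, 0) = (if i = 0 then e else 0)" if i: "i < Suc n" for i
  proof -
    have "M' = W\<^sup>T * (M * W)" unfolding M'_def using W M by auto
    hence "M' $$ (i, 0) = row W\<^sup>T i \<bullet> (M *\<^sub>v col W 0)" using i W M by (auto simp: mult_mat_vec_def)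
    also have "\<dots> = e * (col W i \<bullet> col W 0)" using W i v' Mv' by auto
    also have "col W i \<bullet> col W 0 = (W\<^sup>T * W) $$ (i, 0)" using W(1) i by auto
    also have "\<dots> = 1\<^sub>m (Suc n) $$ (i, 0)" by (simp only: W(3))
    also have "\<dots> = (if i = 0 then 1 else 0)" using i by simp
    finally show ?thesis by simp
  qed
  have row0: "M' $$ (0, j) = (if j = 0 then e else 0)" if j: "j < Suc n" for j
  proof -
    have "M' $$ (0, j) = M'\<^sup>T $$ (j, 0)" using M' j by auto
    thus ?thesis using sym' col0[OF j] by simp
  qed
  define M3 where "M3 = mat n n (\<lambda>(i,j). M' $$ (Suc i, Suc j))"
  have M3: "M3 \<in> carrier_mat n n" unfolding M3_def by auto
  have sym3: "M3\<^sup>T = M3"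
  proof (rule eq_matI)
    fix i j assume "i < dim_row M3" "j < dim_col M3"
    hence ij: "i < n" "j < n" unfolding M3_def by auto
    have "M' $$ (Suc j, Suc i) = M'\<^sup>T $$ (Suc i, Suc j)" using M' ij by auto
    thus "M3\<^sup>T $$ (i, j) = M3 $$ (i, j)" using sym' ij unfolding M3_def by auto
  qed (auto simp: M3_def)
  define E where "E = mat 1 1 (\<lambda>_. e)"
  have E: "E \<in> carrier_mat 1 1" unfolding E_def by auto
  have M'split: "M' = four_block_mat E (0\<^sub>m 1 n) (0\<^sub>m n 1) M3"
  proof (rule eq_matI)
    fix i j assume "i < dim_row (four_block_mat E (0\<^sub>m 1 n) (0\<^sub>m n 1) M3)"
      "j < dim_col (four_block_mat E (0\<^sub>m 1 n) (0\<^sub>m n 1) M3)"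
    hence ij: "i < Suc n" "j < Suc n" using E M3 by auto
    show "M' $$ (i, j) = four_block_mat E (0\<^sub>m 1 n) (0\<^sub>m n 1) M3 $$ (i, j)"
    proof (cases "i = 0 \<or> j = 0")
      case True
      thus ?thesis using col0 row0 ij E M3 by (auto simp: E_def)
    next
      case False
      then obtain i' j' where "i = Suc i'" "j = Suc j'" by (cases i; cases j) auto
      thus ?thesis using ij E M3 by (auto simp: M3_def)
    qed
  qed (insert M' E M3, auto)
  from Suc(1)[OF M3 sym3] obtain U3 D3 where U3: "U3 \<in> carrier_mat n n" "U3\<^sup>T * U3 = 1\<^sub>m n"
    "D3 \<in> carrier_mat n n" "diagonal_mat D3" "M3 = U3 * D3 * U3\<^sup>T" by auto
  define B where "B = four_block_mat (1\<^sub>m 1) (0\<^sub>m 1 n) (0\<^sub>m n 1) U3"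
  define D where "D = four_block_mat E (0\<^sub>m 1 n) (0\<^sub>m n 1) D3"
  define U where "U = W * B"
  have B: "B \<in> carrier_mat (Suc n) (Suc n)" unfolding B_def using U3 by auto
  have D: "D \<in> carrier_mat (Suc n) (Suc n)" unfolding D_def using U3 E by auto
  have U: "U \<in> carrier_mat (Suc n) (Suc n)" unfolding U_def using B W by auto
  have Bt: "B\<^sup>T = four_block_mat (1\<^sub>m 1) (0\<^sub>m 1 n) (0\<^sub>m n 1) U3\<^sup>T"
    unfolding B_def by (subst block_diag_transpose[of _ 1 _ n], insert U3, auto)
  have BtB: "B\<^sup>T * B = 1\<^sub>m (Suc n)" unfolding Bt unfolding B_def
    by (subst block_diag_mult, insert U3, auto)
  have "U\<^sup>T = B\<^sup>T * W\<^sup>T" unfolding U_def by (rule transpose_mult[OF W(1) B])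
  hence "U\<^sup>T * U = (B\<^sup>T * W\<^sup>T) * (W * B)" unfolding U_def by simp
  also have "\<dots> = B\<^sup>T * (W\<^sup>T * (W * B))" by (rule assoc_mult_mat, insert W B, auto)
  also have "W\<^sup>T * (W * B) = (W\<^sup>T * W) * B" by (rule assoc_mult_mat[symmetric], insert W B, auto)
  also have "\<dots> = B" unfolding W(3) using B by simp
  also have "B\<^sup>T * B = 1\<^sub>m (Suc n)" by (rule BtB)
  finally have UtU: "U\<^sup>T * U = 1\<^sub>m (Suc n)" .
  have dD: "diagonal_mat D" using U3(4) E unfolding D_def diagonal_mat_def
    using U3(3) by auto
  have "B * D * B\<^sup>T = four_block_mat (1\<^sub>m 1 * E * 1\<^sub>m 1) (0\<^sub>m 1 n) (0\<^sub>m n 1) (U3 * D3 * U3\<^sup>T)"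
    unfolding Bt unfolding B_def D_def
    by (subst block_diag_mult, insert U3 E, auto, subst block_diag_mult, auto)
  also have "\<dots> = M'" unfolding M'split U3(5) using E by simp
  finally have BDB: "B * D * B\<^sup>T = M'" .
  have "U * D * U\<^sup>T = W * (B * D * B\<^sup>T) * W\<^sup>T" unfolding U_def using W B D
    by (simp add: transpose_mult[of _ "Suc n" "Suc n"] assoc_mult_mat[of _ "Suc n" "Suc n" _ "Suc n" _ "Suc n"])
  also have "\<dots> = (W * W\<^sup>T) * M * (W * W\<^sup>T)" unfolding BDB M'_def using W M
    by (simp add: assoc_mult_mat[of _ "Suc n" "Suc n" _ "Suc n" _ "Suc n"])
  also have "\<dots> = M" unfolding WWt using M by simp
  finally have "M = U * D * U\<^sup>T" by simp
  thus ?case using U UtU D dD by blast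
qed



lemma order_prod_linear:
  fixes x :: "'a :: idom"
  shows "order x (\<Prod>a\<leftarrow>ds. [:- a, 1:]) = count_list ds x"
proof (induct ds)
  case Nil thus ?case by (simp add: order_0I)
next
  case (Cons a ds)
  have nz: "(\<Prod>a\<leftarrow>ds. [:- a, 1:]) \<noteq> 0" by (auto simp: prod_list_zero_iff)
  have nz2: "[:-a, 1:] * (\<Prod>a\<leftarrow>ds. [:- a, 1:]) \<noteq> 0"
    using nz no_zero_divisors[of "[:-a, 1:]"] by (metis pCons_eq_0_iff zero_neq_one)
  have "order x (\<Prod>a\<leftarrow>a # ds. [:- a, 1:]) = order x ([:-a, 1:] * (\<Prod>a\<leftarrow>ds. [:- a, 1:]))"
    by (simp only: list.map prod_list.Cons)
  also have "\<dots> = order x [:-a, 1:] + order x (\<Prod>a\<leftarrow>ds. [:- a, 1:])"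
    by (rule order_mult[OF nz2])
  finally have "order x (\<Prod>a\<leftarrow>a # ds. [:- a, 1:]) = order x [:-a, 1:] + order x (\<Prod>a\<leftarrow>ds. [:- a, 1:])" .
  thus ?case using Cons by (simp add: order_linear')
qed

lemma count_list_filter_same: "P x \<Longrightarrow> count_list (filter P ds) x = count_list ds x"
  by (induct ds) auto

lemma sum_count_filter:
  "(\<Sum>x\<in>{x. P x \<and> x \<in> set ds}. count_list ds x) = length (filter P ds)"
proof -
  have "(\<Sum>x\<in>{x. P x \<and> x \<in> set ds}. count_list ds x) = (\<Sum>x\<in>{x. P x \<and> x \<in> set ds}. count_list (filter P ds) x)"
    by (rule sum.cong, auto simp: count_list_filter_same)
  also have "\<dots> = length (filter P ds)" by (rule sum_count_set, auto)
  finally show ?thesis .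
qed

lemma neg_index_spectral:
  assumes M: "M \<in> carrier_mat n n" and U: "U \<in> carrier_mat n n" and UU: "U\<^sup>T * U = 1\<^sub>m n"
    and D: "D \<in> carrier_mat n n" and dD: "diagonal_mat D" and MD: "M = U * D * U\<^sup>T"
  shows "neg_index M = card {i. i < n \<and> D $$ (i,i) < 0}"
proof -
  have UUt: "U * U\<^sup>T = 1\<^sub>m n" using mat_mult_left_right_inverse[OF _ U UU] U by auto
  have "similar_mat_wit M D U U\<^sup>T" unfolding similar_mat_wit_def Let_def using M U D UU UUt MD by auto
  hence "similar_mat M D" unfolding similar_mat_def by blast
  hence cpMD: "char_poly M = char_poly D" by (rule char_poly_similar)
  have ut: "upper_triangular D" using dD D unfolding upper_triangular_def diagonal_mat_def by auto
  define ds where "ds = diag_mat D"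
  have cp: "char_poly M = (\<Prod>a\<leftarrow>ds. [:- a, 1:])" unfolding cpMD ds_def
    by (rule char_poly_upper_triangular[OF D ut])
  have eig: "eigenvalue M x \<longleftrightarrow> x \<in> set ds" for x
  proof -
    have "eigenvalue M x \<longleftrightarrow> poly (char_poly M) x = 0" by (rule eigenvalue_root_char_poly[OF M])
    also have "\<dots> \<longleftrightarrow> x \<in> set ds" unfolding cp poly_prod_list
      by (induct ds) auto
    finally show ?thesis .
  qed
  have "neg_index M = (\<Sum>x\<in>{x. x < 0 \<and> x \<in> set ds}. count_list ds x)"
    unfolding neg_index_def eig cp order_prod_linear ..
  also have "\<dots> = length (filter (\<lambda>x. x < 0) ds)" by (rule sum_count_filter)
  also have "\<dots> = card {i. i < n \<and> D $$ (i,i) < 0}" unfolding length_filter_conv_card ds_def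
    using D by (auto simp: diag_mat_def intro!: arg_cong[where f=card])
  finally show ?thesis .
qed



lemma wide_kernel:
  fixes A :: "'a :: field mat"
  assumes A: "A \<in> carrier_mat m p" and mp: "m < p"
  shows "\<exists>v. v \<in> carrier_vec p \<and> v \<noteq> 0\<^sub>v p \<and> A *\<^sub>v v = 0\<^sub>v m"
proof -
  define B where "B = mat p p (\<lambda>(i,j). if i < m then A $$ (i,j) else 0)"
  have B: "B \<in> carrier_mat p p" unfolding B_def by auto
  have "det B = 0" unfolding det_def'[OF B]
  proof (rule sum.neutral, intro ballI)
    fix \<pi> assume "\<pi> \<in> {\<pi>. \<pi> permutes {0..<p}}"
    hence "\<pi> (p - 1) < p" using mp by (auto dest: permutes_in_image)
    hence "B $$ (p - 1, \<pi> (p - 1)) = 0" using mp unfolding B_def by auto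
    hence "(\<Prod>i = 0..<p. B $$ (i, \<pi> i)) = 0" using mp
      by (intro prod_zero) (auto intro!: bexI[of _ "p - 1"])
    thus "of_int (sign \<pi>) * (\<Prod>i = 0..<p. B $$ (i, \<pi> i)) = 0" by simp
  qed
  from this[unfolded det_0_iff_vec_prod_zero_field[OF B]] obtain v where
    v: "v \<in> carrier_vec p" "v \<noteq> 0\<^sub>v p" "B *\<^sub>v v = 0\<^sub>v p" by auto
  have "A *\<^sub>v v = 0\<^sub>v m"
  proof (rule eq_vecI)
    fix i assume "i < dim_vec (0\<^sub>v m)"
    hence i: "i < m" by auto
    have "row A i = row B i" using i mp A unfolding B_def by (intro eq_vecI) auto
    hence "(A *\<^sub>v v) $ i = (B *\<^sub>v v) $ i" using i mp A B by auto
    thus "(A *\<^sub>v v) $ i = 0\<^sub>v m $ i" using v(3) i mp by auto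
  qed (use A in auto)
  thus ?thesis using v by auto
qed

lemma diag_mult_vec:
  assumes D: "D \<in> carrier_mat n n" and dD: "diagonal_mat D" and b: "b \<in> carrier_vec n" and i: "i < n"
  shows "(D *\<^sub>v b) $ i = D $$ (i,i) * b $ i"
proof -
  have "(D *\<^sub>v b) $ i = (\<Sum>j\<in>{0..<n}. D $$ (i,j) * b $ j)"
    using D b i by (auto simp: scalar_prod_def)
  also have "\<dots> = (\<Sum>j\<in>{0..<n}. if j = i then D $$ (i,i) * b $ i else 0)"
    using dD D i unfolding diagonal_mat_def by (intro sum.cong) auto
  also have "\<dots> = D $$ (i,i) * b $ i" using i by simp
  finally show ?thesis .
qed

lemma subspace_bound:
  fixes M U D V :: "real mat"
  assumes U: "U \<in> carrier_mat n n" and UU: "U\<^sup>T * U = 1\<^sub>m n" and D: "D \<in> carrier_mat n n"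
    and dD: "diagonal_mat D" and MD: "M = U * D * U\<^sup>T" and V: "V \<in> carrier_mat n k"
    and neg: "\<And>a. a \<in> carrier_vec k \<Longrightarrow> a \<noteq> 0\<^sub>v k \<Longrightarrow> (V *\<^sub>v a) \<bullet> (M *\<^sub>v (V *\<^sub>v a)) < 0"
  shows "k \<le> card {i. i < n \<and> D $$ (i,i) < 0}"
proof (rule ccontr)
  define T where "T = {i. i < n \<and> D $$ (i,i) < 0}"
  assume "\<not> ?thesis"
  hence kc: "card T < k" unfolding T_def by simp
  have "finite T" unfolding T_def by auto
  from finite_distinct_list[OF this] obtain ts where ts: "set ts = T" "distinct ts" by auto
  define c where "c = length ts"
  have c: "c = card T" unfolding c_def using ts distinct_card by metis
  have tsn: "j < c \<Longrightarrow> ts ! j < n" for j using ts(1) nth_mem[of j ts] unfolding c_def T_def by auto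
  define R where "R = mat c n (\<lambda>(j,i). if i = ts ! j then 1 else (0::real))"
  have R: "R \<in> carrier_mat c n" unfolding R_def by auto
  define Z where "Z = four_block_mat V (- U) (0\<^sub>m c k) R"
  have Z: "Z \<in> carrier_mat (n + c) (k + n)" unfolding Z_def using V U R by auto
  from wide_kernel[OF Z] kc c obtain z where z: "z \<in> carrier_vec (k + n)" "z \<noteq> 0\<^sub>v (k + n)"
    "Z *\<^sub>v z = 0\<^sub>v (n + c)" by auto
  define a where "a = vec_first z k"
  define b where "b = vec_last z n"
  have a: "a \<in> carrier_vec k" and b: "b \<in> carrier_vec n" unfolding a_def b_def by auto
  have zab: "z = a @\<^sub>v b" unfolding a_def b_def using vec_first_last_append[OF z(1)] by simp
  have Zz: "Z *\<^sub>v z = (V *\<^sub>v a + (- U) *\<^sub>v b) @\<^sub>v (0\<^sub>m c k *\<^sub>v a + R *\<^sub>v b)"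
    unfolding Z_def zab by (rule four_block_mat_mult_vec[OF V _ _ R a b], insert U, auto)
  have z0: "0\<^sub>v (n + c) = 0\<^sub>v n @\<^sub>v (0\<^sub>v c :: real vec)" by (rule eq_vecI) auto
  have "(V *\<^sub>v a + (- U) *\<^sub>v b) @\<^sub>v (0\<^sub>m c k *\<^sub>v a + R *\<^sub>v b) = Z *\<^sub>v z" by (rule Zz[symmetric])
  also have "\<dots> = 0\<^sub>v (n + c)" by (rule z(3))
  also have "\<dots> = 0\<^sub>v n @\<^sub>v 0\<^sub>v c" by (rule z0)
  finally have "(V *\<^sub>v a + (- U) *\<^sub>v b) @\<^sub>v (0\<^sub>m c k *\<^sub>v a + R *\<^sub>v b) = 0\<^sub>v n @\<^sub>v 0\<^sub>v c" .
  hence eq1: "V *\<^sub>v a + (- U) *\<^sub>v b = 0\<^sub>v n" and eq2: "0\<^sub>m c k *\<^sub>v a + R *\<^sub>v b = 0\<^sub>v c"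
    using append_vec_eq[OF _ zero_carrier_vec[of n], of "V *\<^sub>v a + (- U) *\<^sub>v b"] V U a b by auto
  have VU: "V *\<^sub>v a = U *\<^sub>v b"
  proof (rule eq_vecI)
    fix i assume "i < dim_vec (U *\<^sub>v b)"
    hence i: "i < n" using U by auto
    from arg_cong[OF eq1, of "\<lambda>x. x $ i"] i V U a b
    show "(V *\<^sub>v a) $ i = (U *\<^sub>v b) $ i" by auto
  qed (use V U in auto)
  have Rb: "R *\<^sub>v b = 0\<^sub>v c"
  proof (rule eq_vecI)
    fix j assume "j < dim_vec (0\<^sub>v c :: real vec)"
    hence j: "j < c" by auto
    from arg_cong[OF eq2, of "\<lambda>x. x $ j"] j R a b
    show "(R *\<^sub>v b) $ j = 0\<^sub>v c $ j" by auto
  qed (use R in auto)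
  have bT: "b $ i = 0" if iT: "i \<in> T" for i
  proof -
    from iT ts(1) obtain j where j: "j < c" "ts ! j = i" unfolding c_def by (metis in_set_conv_nth)
    have "(R *\<^sub>v b) $ j = (\<Sum>l\<in>{0..<n}. (if l = ts ! j then 1 else 0) * b $ l)"
      using j R b unfolding R_def by (auto simp: scalar_prod_def)
    also have "\<dots> = (\<Sum>l\<in>{0..<n}. if l = ts ! j then b $ l else 0)" by (rule sum.cong) auto
    also have "\<dots> = b $ (ts ! j)" using tsn[OF j(1)] by simp
    finally show ?thesis using Rb j by auto
  qed
  have UtU: "U\<^sup>T *\<^sub>v (U *\<^sub>v b) = b" using U b UU
    by (metis assoc_mult_mat_vec carrier_matD(1) one_mult_mat_vec transpose_carrier_mat)
  show False
  proof (cases "a = 0\<^sub>v k")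
    case True
    have "V *\<^sub>v 0\<^sub>v k = 0\<^sub>v n" using V by (intro eq_vecI) (auto simp: scalar_prod_def)
    hence "U *\<^sub>v b = 0\<^sub>v n" using VU True by simp
    hence "b = 0\<^sub>v n" using UtU U by auto
    hence "z = 0\<^sub>v (k + n)" unfolding zab using True by (intro eq_vecI) auto
    thus False using z(2) by simp
  next
    case False
    from neg[OF a False] have lt: "(U *\<^sub>v b) \<bullet> (M *\<^sub>v (U *\<^sub>v b)) < 0" unfolding VU .
    have x: "U *\<^sub>v b \<in> carrier_vec n" using U b by auto
    have "M *\<^sub>v (U *\<^sub>v b) = (U * D) *\<^sub>v (U\<^sup>T *\<^sub>v (U *\<^sub>v b))" unfolding MD
      by (rule assoc_mult_mat_vec, insert U D x, auto)
    also have "\<dots> = U *\<^sub>v (D *\<^sub>v (U\<^sup>T *\<^sub>v (U *\<^sub>v b)))"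
      by (rule assoc_mult_mat_vec, insert U D x, auto)
    also have "\<dots> = U *\<^sub>v (D *\<^sub>v b)" unfolding UtU ..
    finally have "(U *\<^sub>v b) \<bullet> (M *\<^sub>v (U *\<^sub>v b)) = (U *\<^sub>v b) \<bullet> (U *\<^sub>v (D *\<^sub>v b))" by simp
    also have "\<dots> = (U\<^sup>T *\<^sub>v (U *\<^sub>v b)) \<bullet> (D *\<^sub>v b)"
      by (rule transpose_vec_mult_scalar[symmetric], insert U D b, auto)
    also have "\<dots> = b \<bullet> (D *\<^sub>v b)" unfolding UtU ..
    also have "\<dots> = (\<Sum>i\<in>{0..<n}. b $ i * (D $$ (i,i) * b $ i))"
      using b D diag_mult_vec[OF D dD b] by (auto simp: scalar_prod_def)
    also have "\<dots> \<ge> 0"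
    proof (rule sum_nonneg)
      fix i assume "i \<in> {0..<n}"
      show "0 \<le> b $ i * (D $$ (i,i) * b $ i)"
      proof (cases "D $$ (i,i) < 0")
        case True
        with \<open>i \<in> {0..<n}\<close> have "b $ i = 0" using bT unfolding T_def by auto
        thus ?thesis by simp
      next
        case False
        hence "0 \<le> D $$ (i,i) * (b $ i * b $ i)" by simp
        thus ?thesis by (simp add: mult_ac)
      qed
    qed
    finally show False using lt by simp
  qed
qed



lemma scalar_prod_self_pos:
  fixes a :: "real vec"
  assumes "a \<in> carrier_vec k" "a \<noteq> 0\<^sub>v k"
  shows "a \<bullet> a > 0"
  using assms conjugate_square_ge_0_vec[of a]
  by (metis conj_real_vec conjugate_square_eq_0_vec order_le_less)

lemma neg_index_neg_bound:
  fixes M V :: "real mat"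
  assumes M: "M \<in> carrier_mat n n" and sym: "M\<^sup>T = M" and V: "V \<in> carrier_mat n k"
    and neg: "\<And>a. a \<in> carrier_vec k \<Longrightarrow> a \<noteq> 0\<^sub>v k \<Longrightarrow> (V *\<^sub>v a) \<bullet> (M *\<^sub>v (V *\<^sub>v a)) < 0"
  shows "k \<le> neg_index M"
proof -
  from real_spectral[OF M sym] obtain U D where UD: "U \<in> carrier_mat n n" "U\<^sup>T * U = 1\<^sub>m n"
    "D \<in> carrier_mat n n" "diagonal_mat D" "M = U * D * U\<^sup>T" by auto
  from subspace_bound[OF UD V neg] neg_index_spectral[OF M UD] show ?thesis by simp
qed

lemma neg_index_pos_bound:
  fixes M V :: "real mat"
  assumes M: "M \<in> carrier_mat n n" and sym: "M\<^sup>T = M" and V: "V \<in> carrier_mat n k"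
    and pos: "\<And>a. a \<in> carrier_vec k \<Longrightarrow> a \<noteq> 0\<^sub>v k \<Longrightarrow> (V *\<^sub>v a) \<bullet> (M *\<^sub>v (V *\<^sub>v a)) > 0"
  shows "neg_index M + k \<le> n"
proof -
  from real_spectral[OF M sym] obtain U D where UD: "U \<in> carrier_mat n n" "U\<^sup>T * U = 1\<^sub>m n"
    "D \<in> carrier_mat n n" "diagonal_mat D" "M = U * D * U\<^sup>T" by auto
  have mD: "- D \<in> carrier_mat n n" "diagonal_mat (- D)" using UD(3,4) unfolding diagonal_mat_def by auto
  have mM: "- M = U * (- D) * U\<^sup>T"
  proof -
    have "U * (- D) = - (U * D)" by (rule uminus_mult_right_mat, insert UD(1,3), auto)
    hence "U * (- D) * U\<^sup>T = - (U * D) * U\<^sup>T" by simp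
    also have "\<dots> = - (U * D * U\<^sup>T)" by (rule uminus_mult_left_mat, insert UD(1,3), auto)
    finally show ?thesis unfolding UD(5) by simp
  qed
  have "k \<le> card {i. i < n \<and> (- D) $$ (i,i) < 0}"
  proof (rule subspace_bound[OF UD(1,2) mD mM V])
    fix a :: "real vec" assume a: "a \<in> carrier_vec k" "a \<noteq> 0\<^sub>v k"
    have "(- M) *\<^sub>v (V *\<^sub>v a) = - (M *\<^sub>v (V *\<^sub>v a))" using M V a by (intro uminus_mult_mat_vec) auto
    thus "(V *\<^sub>v a) \<bullet> ((- M) *\<^sub>v (V *\<^sub>v a)) < 0" using pos[OF a] M V a by simp
  qed
  also have "{i. i < n \<and> (- D) $$ (i,i) < 0} = {i. i < n \<and> D $$ (i,i) > 0}" using UD(3) by auto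
  finally have k: "k \<le> card {i. i < n \<and> D $$ (i,i) > 0}" .
  have "card {i. i < n \<and> D $$ (i,i) > 0} + card {i. i < n \<and> D $$ (i,i) < 0}
    = card ({i. i < n \<and> D $$ (i,i) > 0} \<union> {i. i < n \<and> D $$ (i,i) < 0})"
    by (rule card_Un_disjoint[symmetric]) auto
  also have "\<dots> \<le> card {0..<n}" by (rule card_mono) auto
  finally show ?thesis using k neg_index_spectral[OF M UD] by simp
qed

lemma quad_form_sum:
  fixes M :: "real mat"
  assumes M: "M \<in> carrier_mat n n" and x: "x \<in> carrier_vec n"
  shows "x \<bullet> (M *\<^sub>v x) = (\<Sum>i<n. \<Sum>j<n. x $ i * M $$ (i,j) * x $ j)"
  using M x by (auto simp: scalar_prod_def sum_distrib_left lessThan_atLeast0 mult_ac intro!: sum.cong)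

lemma quad_diff_bound:
  fixes M M0 :: "real mat"
  assumes M: "M \<in> carrier_mat n n" and M0: "M0 \<in> carrier_mat n n" and x: "x \<in> carrier_vec n"
    and close: "\<And>i j. i < n \<Longrightarrow> j < n \<Longrightarrow> \<bar>M $$ (i,j) - M0 $$ (i,j)\<bar> \<le> \<epsilon>"
  shows "\<bar>x \<bullet> (M *\<^sub>v x) - x \<bullet> (M0 *\<^sub>v x)\<bar> \<le> real n * \<epsilon> * (x \<bullet> x)"
proof -
  have "x \<bullet> (M *\<^sub>v x) - x \<bullet> (M0 *\<^sub>v x) = (\<Sum>i<n. \<Sum>j<n. x $ i * (M $$ (i,j) - M0 $$ (i,j)) * x $ j)"
    unfolding quad_form_sum[OF M x] quad_form_sum[OF M0 x] sum_subtractf[symmetric]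
    by (simp add: algebra_simps)
  also have "\<bar>\<dots>\<bar> \<le> (\<Sum>i<n. \<Sum>j<n. \<bar>x $ i * (M $$ (i,j) - M0 $$ (i,j)) * x $ j\<bar>)"
    by (rule order_trans[OF sum_abs], rule sum_mono, rule sum_abs)
  also have "\<dots> \<le> (\<Sum>i<n. \<Sum>j<n. \<epsilon> * ((x $ i)^2 + (x $ j)^2) / 2)"
  proof (rule sum_mono, rule sum_mono)
    fix i j assume "i \<in> {..<n}" "j \<in> {..<n}"
    hence c: "\<bar>M $$ (i,j) - M0 $$ (i,j)\<bar> \<le> \<epsilon>" using close by auto
    have "\<bar>x $ i * (M $$ (i,j) - M0 $$ (i,j)) * x $ j\<bar> = \<bar>M $$ (i,j) - M0 $$ (i,j)\<bar> * (\<bar>x $ i\<bar> * \<bar>x $ j\<bar>)"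
      by (simp add: abs_mult mult_ac)
    also have "\<dots> \<le> \<epsilon> * (\<bar>x $ i\<bar> * \<bar>x $ j\<bar>)" by (rule mult_right_mono[OF c], simp)
    also have "\<bar>x $ i\<bar> * \<bar>x $ j\<bar> \<le> ((x $ i)^2 + (x $ j)^2) / 2"
    proof -
      have "0 \<le> (\<bar>x $ i\<bar> - \<bar>x $ j\<bar>)^2" by simp
      thus ?thesis by (simp add: power2_eq_square algebra_simps)
    qed
    hence "\<epsilon> * (\<bar>x $ i\<bar> * \<bar>x $ j\<bar>) \<le> \<epsilon> * (((x $ i)^2 + (x $ j)^2) / 2)"
      using c by (intro mult_left_mono) auto
    finally show "\<bar>x $ i * (M $$ (i,j) - M0 $$ (i,j)) * x $ j\<bar> \<le> \<epsilon> * ((x $ i)^2 + (x $ j)^2) / 2"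
      by simp
  qed
  also have "\<dots> = (\<epsilon> / 2) * ((\<Sum>i<n. \<Sum>j<n. (x $ i)^2) + (\<Sum>i<n. \<Sum>j<n. (x $ j)^2))"
    by (simp add: sum_distrib_left sum.distrib algebra_simps add_divide_distrib)
  also have "(\<Sum>i<n. \<Sum>j<n. (x $ j)^2) = (\<Sum>i<n. \<Sum>j<n. (x $ i)^2)" by (rule sum.swap)
  also have "(\<Sum>i<n. \<Sum>j<n. (x $ i)^2) = real n * (x \<bullet> x)"
    using x by (simp add: scalar_prod_def sum_distrib_left lessThan_atLeast0 power2_eq_square)
  finally show ?thesis by (simp add: mult_ac)
qed



lemma sel_subspace:
  fixes U D M0 M :: "real mat" and \<sigma> \<delta> \<epsilon> :: real
  assumes U: "U \<in> carrier_mat n n" and UU: "U\<^sup>T * U = 1\<^sub>m n" and D: "D \<in> carrier_mat n n"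
    and dD: "diagonal_mat D" and M0D: "M0 = U * D * U\<^sup>T" and M: "M \<in> carrier_mat n n"
    and S: "S \<subseteq> {0..<n}" and \<delta>: "\<delta> > 0" and Sd: "\<And>i. i \<in> S \<Longrightarrow> \<sigma> * D $$ (i,i) \<ge> \<delta>"
    and close: "\<And>i j. i < n \<Longrightarrow> j < n \<Longrightarrow> \<bar>M $$ (i,j) - M0 $$ (i,j)\<bar> \<le> \<epsilon>"
    and ne: "real n * \<epsilon> < \<delta>" and sig: "\<bar>\<sigma>\<bar> = 1"
  shows "\<exists>V \<in> carrier_mat n (card S). \<forall>a \<in> carrier_vec (card S). a \<noteq> 0\<^sub>v (card S) \<longrightarrow>
     \<sigma> * ((V *\<^sub>v a) \<bullet> (M *\<^sub>v (V *\<^sub>v a))) > 0"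
proof -
  have M0: "M0 \<in> carrier_mat n n" unfolding M0D using U D by auto
  have "finite S" using S finite_subset by blast
  from finite_distinct_list[OF this] obtain ts where ts: "set ts = S" "distinct ts" by auto
  define c where "c = length ts"
  have c: "c = card S" unfolding c_def using ts distinct_card by metis
  have tsn: "j < c \<Longrightarrow> ts ! j < n" for j using ts(1) nth_mem[of j ts] S unfolding c_def by auto
  define Sel where "Sel = mat n c (\<lambda>(i,j). if i = ts ! j then 1 else (0::real))"
  have Sel: "Sel \<in> carrier_mat n c" unfolding Sel_def by auto
  define V where "V = U * Sel"
  have V: "V \<in> carrier_mat n c" unfolding V_def using U Sel by auto
  have SS: "Sel\<^sup>T * Sel = 1\<^sub>m c"
  proof (rule eq_matI)
    fix j j' assume "j < dim_row (1\<^sub>m c)" "j' < dim_col (1\<^sub>m c)"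
    hence j: "j < c" "j' < c" by auto
    have "(Sel\<^sup>T * Sel) $$ (j, j') = (\<Sum>i\<in>{0..<n}. (if i = ts ! j then 1 else 0) * (if i = ts ! j' then 1 else 0))"
      using j Sel unfolding Sel_def by (auto simp: scalar_prod_def)
    also have "\<dots> = (\<Sum>i\<in>{0..<n}. if i = ts ! j then (if ts ! j = ts ! j' then 1 else 0) else 0)"
      by (rule sum.cong) auto
    also have "\<dots> = (if ts ! j = ts ! j' then 1 else 0)" using tsn[OF j(1)] by simp
    also have "\<dots> = 1\<^sub>m c $$ (j, j')" using j ts(2) unfolding c_def by (simp add: nth_eq_iff_index_eq)
    finally show "(Sel\<^sup>T * Sel) $$ (j, j') = 1\<^sub>m c $$ (j, j')" .
  qed (use Sel in auto)
  show ?thesis unfolding c[symmetric]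
  proof (intro bexI[OF _ V] ballI impI)
    fix a :: "real vec" assume a: "a \<in> carrier_vec c" and a0: "a \<noteq> 0\<^sub>v c"
    define b where "b = Sel *\<^sub>v a"
    have b: "b \<in> carrier_vec n" unfolding b_def using Sel a by auto
    have bb: "b \<bullet> b = a \<bullet> a"
    proof -
      have "b \<bullet> b = (Sel\<^sup>T *\<^sub>v (Sel *\<^sub>v a)) \<bullet> a" unfolding b_def
        by (rule transpose_vec_mult_scalar[symmetric], insert Sel a, auto)
      also have "Sel\<^sup>T *\<^sub>v (Sel *\<^sub>v a) = (Sel\<^sup>T * Sel) *\<^sub>v a"
        by (rule assoc_mult_mat_vec[symmetric], insert Sel a, auto)
      also have "\<dots> = a" unfolding SS using a by simp
      finally show ?thesis .
    qed
    have bS: "b $ i = 0" if i: "i < n" "i \<notin> S" for i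
    proof -
      have "b $ i = (\<Sum>j\<in>{0..<c}. (if i = ts ! j then 1 else 0) * a $ j)"
        unfolding b_def using i Sel a unfolding Sel_def by (auto simp: scalar_prod_def)
      also have "\<dots> = 0" using i ts(1) nth_mem[of _ ts] unfolding c_def by (intro sum.neutral) auto
      finally show ?thesis .
    qed
    define x where "x = U *\<^sub>v b"
    have x: "x \<in> carrier_vec n" unfolding x_def using U b by auto
    have Vax: "V *\<^sub>v a = x" unfolding x_def b_def V_def by (rule assoc_mult_mat_vec, insert U Sel a, auto)
    have UtU: "U\<^sup>T *\<^sub>v x = b" unfolding x_def using U b UU
      by (metis assoc_mult_mat_vec carrier_matD(1) one_mult_mat_vec transpose_carrier_mat)
    have xx: "x \<bullet> x = b \<bullet> b"
    proof -
      have "x \<bullet> x = (U\<^sup>T *\<^sub>v x) \<bullet> b" unfolding x_def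
        by (rule transpose_vec_mult_scalar[symmetric], insert U b x, auto)
      thus ?thesis unfolding UtU .
    qed
    have xpos: "x \<bullet> x > 0" unfolding xx bb by (rule scalar_prod_self_pos[OF a a0])
    have "M0 *\<^sub>v x = (U * D) *\<^sub>v (U\<^sup>T *\<^sub>v x)" unfolding M0D
      by (rule assoc_mult_mat_vec, insert U D x, auto)
    also have "\<dots> = U *\<^sub>v (D *\<^sub>v b)" unfolding UtU by (rule assoc_mult_mat_vec, insert U D b, auto)
    finally have M0x: "M0 *\<^sub>v x = U *\<^sub>v (D *\<^sub>v b)" .
    have "x \<bullet> (M0 *\<^sub>v x) = (U\<^sup>T *\<^sub>v x) \<bullet> (D *\<^sub>v b)" unfolding M0x
      by (rule transpose_vec_mult_scalar[symmetric], insert U D b x, auto)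
    also have "\<dots> = (\<Sum>i\<in>{0..<n}. b $ i * (D $$ (i,i) * b $ i))"
      unfolding UtU using b D diag_mult_vec[OF D dD b] by (auto simp: scalar_prod_def)
    finally have q0: "x \<bullet> (M0 *\<^sub>v x) = (\<Sum>i\<in>{0..<n}. b $ i * (D $$ (i,i) * b $ i))" .
    have "\<sigma> * (x \<bullet> (M0 *\<^sub>v x)) = (\<Sum>i\<in>{0..<n}. (\<sigma> * D $$ (i,i)) * (b $ i * b $ i))"
      unfolding q0 sum_distrib_left by (simp add: mult_ac)
    also have "\<dots> \<ge> (\<Sum>i\<in>{0..<n}. \<delta> * (b $ i * b $ i))"
    proof (rule sum_mono)
      fix i assume i: "i \<in> {0..<n}"
      show "\<delta> * (b $ i * b $ i) \<le> \<sigma> * D $$ (i, i) * (b $ i * b $ i)"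
      proof (cases "i \<in> S")
        case True
        thus ?thesis using Sd[OF True] by (intro mult_right_mono) auto
      next
        case False
        thus ?thesis using bS[of i] i by auto
      qed
    qed
    also have "(\<Sum>i\<in>{0..<n}. \<delta> * (b $ i * b $ i)) = \<delta> * (x \<bullet> x)"
      unfolding xx using b by (simp add: scalar_prod_def sum_distrib_left)
    finally have q0b: "\<sigma> * (x \<bullet> (M0 *\<^sub>v x)) \<ge> \<delta> * (x \<bullet> x)" .
    have qd: "\<bar>x \<bullet> (M *\<^sub>v x) - x \<bullet> (M0 *\<^sub>v x)\<bar> \<le> real n * \<epsilon> * (x \<bullet> x)"
      by (rule quad_diff_bound[OF M M0 x close])
    have "\<bar>\<sigma> * (x \<bullet> (M *\<^sub>v x)) - \<sigma> * (x \<bullet> (M0 *\<^sub>v x))\<bar> = \<bar>x \<bullet> (M *\<^sub>v x) - x \<bullet> (M0 *\<^sub>v x)\<bar>"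
      using sig by (simp add: right_diff_distrib[symmetric] abs_mult)
    with qd have "\<sigma> * (x \<bullet> (M *\<^sub>v x)) \<ge> \<sigma> * (x \<bullet> (M0 *\<^sub>v x)) - real n * \<epsilon> * (x \<bullet> x)" by linarith
    moreover have "real n * \<epsilon> * (x \<bullet> x) < \<delta> * (x \<bullet> x)" using ne xpos by simp
    ultimately have "\<sigma> * (x \<bullet> (M *\<^sub>v x)) > 0" using q0b by linarith
    thus "\<sigma> * ((V *\<^sub>v a) \<bullet> (M *\<^sub>v (V *\<^sub>v a))) > 0" unfolding Vax .
  qed
qed



lemma neg_index_local:
  fixes M0 :: "real mat"
  assumes M0: "M0 \<in> carrier_mat n n" and sym0: "M0\<^sup>T = M0" and det0: "det M0 \<noteq> 0"
  shows "\<exists>\<epsilon>>0. \<forall>M. M \<in> carrier_mat n n \<longrightarrow> M\<^sup>T = M \<longrightarrow>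
    (\<forall>i<n. \<forall>j<n. \<bar>M $$ (i,j) - M0 $$ (i,j)\<bar> \<le> \<epsilon>) \<longrightarrow> neg_index M = neg_index M0"
proof (cases "n = 0")
  case True
  show ?thesis
  proof (intro exI[of _ 1] conjI allI impI)
    fix M :: "real mat" assume "M \<in> carrier_mat n n"
    hence "M = M0" using M0 True by (intro eq_matI) auto
    thus "neg_index M = neg_index M0" by simp
  qed simp
next
  case False
  hence n: "n > 0" by simp
  from real_spectral[OF M0 sym0] obtain U D where UD: "U \<in> carrier_mat n n" "U\<^sup>T * U = 1\<^sub>m n"
    "D \<in> carrier_mat n n" "diagonal_mat D" "M0 = U * D * U\<^sup>T" by auto
  have Dnz: "D $$ (i,i) \<noteq> 0" if i: "i < n" for i
  proof
    assume D0: "D $$ (i,i) = 0"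
    define v where "v = U *\<^sub>v unit_vec n i"
    have e: "unit_vec n i \<in> carrier_vec n" by simp
    have v: "v \<in> carrier_vec n" unfolding v_def using UD(1) by auto
    have UtU: "U\<^sup>T *\<^sub>v v = unit_vec n i" unfolding v_def using UD(1,2) e
      by (metis assoc_mult_mat_vec carrier_matD(1) one_mult_mat_vec transpose_carrier_mat)
    have De: "D *\<^sub>v unit_vec n i = 0\<^sub>v n"
    proof (rule eq_vecI)
      fix k assume "k < dim_vec (0\<^sub>v n :: real vec)"
      hence k: "k < n" by simp
      show "(D *\<^sub>v unit_vec n i) $ k = 0\<^sub>v n $ k"
        using diag_mult_vec[OF UD(3,4) e k] D0 k i by auto
    qed (use UD(3) in auto)
    have "M0 *\<^sub>v v = (U * D) *\<^sub>v (U\<^sup>T *\<^sub>v v)" unfolding UD(5)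
      by (rule assoc_mult_mat_vec, insert UD(1,3) v, auto)
    also have "\<dots> = U *\<^sub>v (D *\<^sub>v unit_vec n i)" unfolding UtU
      by (rule assoc_mult_mat_vec, insert UD(1,3) e, auto)
    also have "\<dots> = 0\<^sub>v n" unfolding De using UD(1) by (intro eq_vecI) (auto simp: scalar_prod_def)
    finally have Mv: "M0 *\<^sub>v v = 0\<^sub>v n" .
    have "v \<noteq> 0\<^sub>v n"
    proof
      assume "v = 0\<^sub>v n"
      hence "U\<^sup>T *\<^sub>v v = 0\<^sub>v n" using UD(1) by (intro eq_vecI) (auto simp: scalar_prod_def)
      hence "unit_vec n i = (0\<^sub>v n :: real vec)" unfolding UtU .
      thus False using i by (metis index_unit_vec(1) index_zero_vec(1) zero_neq_one)
    qed
    hence "det M0 = 0" using det_0_iff_vec_prod_zero_field[OF M0] v Mv by auto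
    thus False using det0 by simp
  qed
  define \<delta> where "\<delta> = Min ((\<lambda>i. \<bar>D $$ (i,i)\<bar>) ` {0..<n})"
  have \<delta>: "\<delta> > 0" unfolding \<delta>_def using n Dnz by (subst Min_gr_iff) auto
  have \<delta>le: "\<delta> \<le> \<bar>D $$ (i,i)\<bar>" if "i < n" for i unfolding \<delta>_def using that by (intro Min_le) auto
  define \<epsilon> where "\<epsilon> = \<delta> / (2 * real n)"
  have \<epsilon>: "\<epsilon> > 0" unfolding \<epsilon>_def using \<delta> n by auto
  have ne: "real n * \<epsilon> < \<delta>" unfolding \<epsilon>_def using \<delta> n by auto
  define T where "T = {i. i < n \<and> D $$ (i,i) < 0}"
  define P where "P = {i. i < n \<and> D $$ (i,i) > 0}"
  have TP: "card T + card P = n"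
  proof -
    have "card T + card P = card (T \<union> P)" unfolding T_def P_def by (rule card_Un_disjoint[symmetric]) auto
    also have "T \<union> P = {0..<n}" unfolding T_def P_def using Dnz by (force simp: linorder_neq_iff)
    finally show ?thesis by simp
  qed
  have neg0: "neg_index M0 = card T" unfolding T_def by (rule neg_index_spectral[OF M0 UD])
  show ?thesis
  proof (intro exI[of _ \<epsilon>] conjI allI impI \<epsilon>)
    fix M :: "real mat" assume M: "M \<in> carrier_mat n n" and sym: "M\<^sup>T = M"
      and close: "\<forall>i<n. \<forall>j<n. \<bar>M $$ (i,j) - M0 $$ (i,j)\<bar> \<le> \<epsilon>"
    from sel_subspace[OF UD M, of T \<delta> "-1" \<epsilon>] \<delta> \<delta>le close ne
    obtain V1 where V1: "V1 \<in> carrier_mat n (card T)"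
      "\<And>a. a \<in> carrier_vec (card T) \<Longrightarrow> a \<noteq> 0\<^sub>v (card T) \<Longrightarrow> -1 * ((V1 *\<^sub>v a) \<bullet> (M *\<^sub>v (V1 *\<^sub>v a))) > 0"
      unfolding T_def by fastforce
    have "card T \<le> neg_index M"
      by (rule neg_index_neg_bound[OF M sym V1(1)], insert V1(2), force)
    moreover
    from sel_subspace[OF UD M, of P \<delta> 1 \<epsilon>] \<delta> \<delta>le close ne
    obtain V2 where V2: "V2 \<in> carrier_mat n (card P)"
      "\<And>a. a \<in> carrier_vec (card P) \<Longrightarrow> a \<noteq> 0\<^sub>v (card P) \<Longrightarrow> 1 * ((V2 *\<^sub>v a) \<bullet> (M *\<^sub>v (V2 *\<^sub>v a))) > 0"
      unfolding P_def by fastforce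
    have "neg_index M + card P \<le> n"
      by (rule neg_index_pos_bound[OF M sym V2(1)], insert V2(2), force)
    ultimately show "neg_index M = neg_index M0" using TP neg0 by linarith
  qed
qed



lemma locally_const_interval:
  fixes f :: "real \<Rightarrow> 'b" and a b :: real
  assumes loc: "\<And>t. t \<in> {a..<b} \<Longrightarrow> \<exists>\<eta>>0. \<forall>s\<in>{a..<b}. \<bar>s - t\<bar> < \<eta> \<longrightarrow> f s = f t"
    and t1: "t1 \<in> {a..<b}"
  shows "f t1 = f a"
proof -
  define S where "S = {s. a \<le> s \<and> s \<le> t1 \<and> (\<forall>u. a \<le> u \<and> u \<le> s \<longrightarrow> f u = f a)}"
  have aS: "a \<in> S" unfolding S_def using t1 by auto
  have bdd: "bdd_above S" unfolding S_def by (rule bdd_aboveI[of _ t1]) auto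
  define \<sigma> where "\<sigma> = Sup S"
  have a\<sigma>: "a \<le> \<sigma>" unfolding \<sigma>_def by (rule cSup_upper[OF aS bdd])
  have \<sigma>t: "\<sigma> \<le> t1" unfolding \<sigma>_def
  proof (rule cSup_least)
    show "S \<noteq> {}" using aS by blast
    fix x assume "x \<in> S" thus "x \<le> t1" unfolding S_def by blast
  qed
  have \<sigma>ab: "\<sigma> \<in> {a..<b}" using a\<sigma> \<sigma>t t1 atLeastLessThan_iff by (metis order_le_less_trans)
  from loc[OF \<sigma>ab] obtain \<eta> where \<eta>: "\<eta> > 0" "\<And>s. s \<in> {a..<b} \<Longrightarrow> \<bar>s - \<sigma>\<bar> < \<eta> \<Longrightarrow> f s = f \<sigma>" by auto
  have below: "f u = f a" if u: "a \<le> u" "u < \<sigma>" for u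
  proof -
    have ne: "S \<noteq> {}" using aS by auto
    from u(2) have "\<exists>s\<in>S. u < s" unfolding \<sigma>_def by (subst (asm) less_cSup_iff[OF ne bdd])
    then obtain s where s: "s \<in> S" "u < s" by blast
    from s(1) have "\<forall>v. a \<le> v \<and> v \<le> s \<longrightarrow> f v = f a" unfolding S_def by blast
    thus ?thesis using u(1) s(2) less_imp_le by blast
  qed
  have f\<sigma>: "f \<sigma> = f a"
  proof (cases "\<sigma> = a")
    case True thus ?thesis by simp
  next
    case False
    define u where "u = max a (\<sigma> - \<eta> / 2)"
    have u: "a \<le> u" "u < \<sigma>" unfolding u_def using False a\<sigma> \<eta>(1) by auto
    have u1: "\<sigma> - \<eta> / 2 \<le> u" unfolding u_def by simp
    have u2: "u \<in> {a..<b}" using u \<sigma>ab by auto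
    have u3: "\<bar>u - \<sigma>\<bar> < \<eta>" using u1 u(2) \<eta>(1) by linarith
    have "f u = f \<sigma>" by (rule \<eta>(2)[OF u2 u3])
    thus ?thesis using below[OF u] by simp
  qed
  have "\<sigma> = t1"
  proof (rule ccontr)
    assume "\<sigma> \<noteq> t1"
    hence lt: "\<sigma> < t1" using \<sigma>t by simp
    define s' where "s' = min t1 (\<sigma> + \<eta> / 2)"
    have s'1: "s' \<le> t1" "s' \<le> \<sigma> + \<eta> / 2" unfolding s'_def by auto
    have s'2: "\<sigma> < s'" unfolding s'_def using lt \<eta>(1) by simp
    have "s' \<in> S" unfolding S_def
    proof (intro CollectI conjI allI impI)
      show "a \<le> s'" using a\<sigma> s'2 by linarith
      show "s' \<le> t1" by (rule s'1(1))
      fix v assume v: "a \<le> v \<and> v \<le> s'"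
      show "f v = f a"
      proof (cases "v < \<sigma>")
        case True
        from v have "a \<le> v" by blast
        from below[OF this True] show ?thesis .
      next
        case False
        have "v < b" using v s'1(1) t1 by simp
        hence "v \<in> {a..<b}" using v by simp
        moreover have "\<bar>v - \<sigma>\<bar> < \<eta>" using False v s'1(2) \<eta>(1) by linarith
        ultimately have "f v = f \<sigma>" by (rule \<eta>(2))
        thus ?thesis using f\<sigma> by simp
      qed
    qed
    hence "s' \<le> \<sigma>" unfolding \<sigma>_def by (rule cSup_upper[OF _ bdd])
    thus False using s'2 by simp
  qed
  thus ?thesis using f\<sigma> by simp
qed

lemma neg_index_affine_const:
  fixes C0 C1 :: "real mat"
  assumes C0: "C0 \<in> carrier_mat n n" and C1: "C1 \<in> carrier_mat n n"
    and s0: "C0\<^sup>T = C0" and s1: "C1\<^sup>T = C1"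
    and nd: "\<And>t. t \<in> {a..<b} \<Longrightarrow> det (C0 + t \<cdot>\<^sub>m C1) \<noteq> 0"
    and t: "t \<in> {a..<b}"
  shows "neg_index (C0 + t \<cdot>\<^sub>m C1) = neg_index (C0 + a \<cdot>\<^sub>m C1)"
proof (rule locally_const_interval[OF _ t, of "\<lambda>t. neg_index (C0 + t \<cdot>\<^sub>m C1)"])
  fix t0 assume t0: "t0 \<in> {a..<b}"
  have car: "C0 + s \<cdot>\<^sub>m C1 \<in> carrier_mat n n" for s using C0 C1 by auto
  have sym: "(C0 + s \<cdot>\<^sub>m C1)\<^sup>T = C0 + s \<cdot>\<^sub>m C1" for s
    using C0 C1 s0 s1 by (intro eq_matI) (auto, metis index_transpose_mat(1) carrier_matD)
  from neg_index_local[OF car sym nd[OF t0]] obtain \<epsilon> where \<epsilon>: "\<epsilon> > 0"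
    "\<And>M. M \<in> carrier_mat n n \<Longrightarrow> M\<^sup>T = M \<Longrightarrow> (\<forall>i<n. \<forall>j<n. \<bar>M $$ (i,j) - (C0 + t0 \<cdot>\<^sub>m C1) $$ (i,j)\<bar> \<le> \<epsilon>)
      \<Longrightarrow> neg_index M = neg_index (C0 + t0 \<cdot>\<^sub>m C1)" by blast
  define K where "K = 1 + (\<Sum>i<n. \<Sum>j<n. \<bar>C1 $$ (i,j)\<bar>)"
  have K: "K > 0" unfolding K_def by (simp add: add_pos_nonneg sum_nonneg)
  have Kle: "\<bar>C1 $$ (i,j)\<bar> \<le> K" if "i < n" "j < n" for i j
  proof -
    have "\<bar>C1 $$ (i,j)\<bar> \<le> (\<Sum>j<n. \<bar>C1 $$ (i,j)\<bar>)"
      by (rule member_le_sum[of j "{..<n}" "\<lambda>j. \<bar>C1 $$ (i,j)\<bar>"]) (use that in auto)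
    also have "\<dots> \<le> (\<Sum>i<n. \<Sum>j<n. \<bar>C1 $$ (i,j)\<bar>)"
      by (rule member_le_sum[of i "{..<n}" "\<lambda>i. \<Sum>j<n. \<bar>C1 $$ (i,j)\<bar>"]) (use that in \<open>auto intro: sum_nonneg\<close>)
    finally show ?thesis unfolding K_def by simp
  qed
  show "\<exists>\<eta>>0. \<forall>s\<in>{a..<b}. \<bar>s - t0\<bar> < \<eta> \<longrightarrow> neg_index (C0 + s \<cdot>\<^sub>m C1) = neg_index (C0 + t0 \<cdot>\<^sub>m C1)"
  proof (intro exI[of _ "\<epsilon> / K"] conjI ballI impI)
    show "\<epsilon> / K > 0" using \<epsilon> K by simp
    fix s assume "s \<in> {a..<b}" and st: "\<bar>s - t0\<bar> < \<epsilon> / K"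
    show "neg_index (C0 + s \<cdot>\<^sub>m C1) = neg_index (C0 + t0 \<cdot>\<^sub>m C1)"
    proof (rule \<epsilon>(2)[OF car sym], intro allI impI)
      fix i j assume ij: "i < n" "j < n"
      have "\<bar>(C0 + s \<cdot>\<^sub>m C1) $$ (i,j) - (C0 + t0 \<cdot>\<^sub>m C1) $$ (i,j)\<bar> = \<bar>s - t0\<bar> * \<bar>C1 $$ (i,j)\<bar>"
        using ij C0 C1 by (simp add: left_diff_distrib[symmetric] abs_mult)
      also have "\<dots> \<le> \<bar>s - t0\<bar> * K" by (rule mult_left_mono[OF Kle[OF ij]]) simp
      also have "\<dots> \<le> \<epsilon>" using st K by (simp add: pos_less_divide_eq less_imp_le)
      finally show "\<bar>(C0 + s \<cdot>\<^sub>m C1) $$ (i,j) - (C0 + t0 \<cdot>\<^sub>m C1) $$ (i,j)\<bar> \<le> \<epsilon>" .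
    qed
  qed
qed



lemma J_carrier: "J_mat N \<in> carrier_mat (N + N) (N + N)"
  unfolding J_mat_def by auto

lemma J_sq: "J_mat N * J_mat N = - 1\<^sub>m (N + N)"
proof -
  have "J_mat N * J_mat N = four_block_mat (0\<^sub>m N N * 0\<^sub>m N N + 1\<^sub>m N * - 1\<^sub>m N) (0\<^sub>m N N * 1\<^sub>m N + 1\<^sub>m N * 0\<^sub>m N N)
      (- 1\<^sub>m N * 0\<^sub>m N N + 0\<^sub>m N N * - 1\<^sub>m N) (- 1\<^sub>m N * 1\<^sub>m N + 0\<^sub>m N N * 0\<^sub>m N N)"
    unfolding J_mat_def by (rule mult_four_block_mat) auto
  also have "\<dots> = - 1\<^sub>m (N + N)" by (rule eq_matI) auto
  finally show ?thesis .
qed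

lemma J_transpose: "(J_mat N)\<^sup>T = - J_mat N"
  unfolding J_mat_def by (rule eq_matI) auto

lemma vec_add_zero_eq:
  fixes v w :: "'a :: ab_group_add vec"
  assumes "v \<in> carrier_vec n" "w \<in> carrier_vec n" "v + w = 0\<^sub>v n"
  shows "w = - v"
proof (rule eq_vecI)
  fix i assume "i < dim_vec (- v)"
  hence i: "i < n" using assms by auto
  have "(v + w) $ i = v $ i + w $ i" by (rule index_add_vec) (use assms(2) i in auto)
  moreover have "(v + w) $ i = 0" using assms(3) i by simp
  ultimately have "v $ i + w $ i = 0" by simp
  thus "w $ i = (- v) $ i" using i assms by (auto simp: eq_neg_iff_add_eq_0 add.commute)
qed (use assms in auto)

definition C0_mat :: "nat \<Rightarrow> real mat" where
  "C0_mat N = four_block_mat (0\<^sub>m (N + N) (N + N)) (J_mat N) (- J_mat N) (0\<^sub>m (N + N) (N + N))"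

definition C1_mat :: "real mat \<Rightarrow> nat \<Rightarrow> real mat" where
  "C1_mat A N = four_block_mat (- A) (0\<^sub>m (N + N) (N + N)) (0\<^sub>m (N + N) (N + N)) (- A)"

lemma C0_carrier: "C0_mat N \<in> carrier_mat ((N + N) + (N + N)) ((N + N) + (N + N))"
  unfolding C0_mat_def using J_carrier[of N] by auto

lemma C1_carrier: "A \<in> carrier_mat (N + N) (N + N) \<Longrightarrow> C1_mat A N \<in> carrier_mat ((N + N) + (N + N)) ((N + N) + (N + N))"
  unfolding C1_mat_def by auto

lemma T1_decomp:
  assumes A: "A \<in> carrier_mat (N + N) (N + N)"
  shows "T1 N (l \<cdot>\<^sub>m A) = C0_mat N + l \<cdot>\<^sub>m C1_mat A N"
  unfolding T1_def C0_mat_def C1_mat_def using A J_carrier[of N]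
  by (intro eq_matI) (auto simp del: index_mat_four_block, auto)

lemma J_transpose': "(- J_mat N)\<^sup>T = J_mat N"
  unfolding J_mat_def by (rule eq_matI) auto

lemma C0_sym: "(C0_mat N)\<^sup>T = C0_mat N"
  unfolding C0_mat_def
  by (subst transpose_four_block_mat[OF _ J_carrier _ zero_carrier_mat], auto simp: J_transpose J_transpose' J_carrier)

lemma C1_sym: assumes A: "A \<in> carrier_mat (N + N) (N + N)" and s: "A\<^sup>T = A"
  shows "(C1_mat A N)\<^sup>T = C1_mat A N"
  unfolding C1_mat_def
  by (subst transpose_four_block_mat[OF _ zero_carrier_mat zero_carrier_mat], insert A s, auto simp: transpose_uminus)

lemma neg_index_C0: "neg_index (C0_mat N) = N + N"
proof -
  let ?n = "N + N"
  let ?J = "J_mat N"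
  have J: "?J \<in> carrier_mat ?n ?n" by (rule J_carrier)
  have C0: "C0_mat N \<in> carrier_mat (?n + ?n) (?n + ?n)" by (rule C0_carrier)
  define V1 where "V1 = mat (?n + ?n) ?n (\<lambda>(i,j). if i < ?n then (if i = j then 1 else 0) else ?J $$ (i - ?n, j))"
  define V2 where "V2 = mat (?n + ?n) ?n (\<lambda>(i,j). if i < ?n then (if i = j then 1 else 0) else - ?J $$ (i - ?n, j))"
  have V1: "V1 \<in> carrier_mat (?n + ?n) ?n" unfolding V1_def by auto
  have V2: "V2 \<in> carrier_mat (?n + ?n) ?n" unfolding V2_def by auto
  have V1a: "V1 *\<^sub>v a = a @\<^sub>v (?J *\<^sub>v a)" if a: "a \<in> carrier_vec ?n" for a
  proof (rule eq_vecI)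
    fix i assume "i < dim_vec (a @\<^sub>v (?J *\<^sub>v a))"
    hence i: "i < ?n + ?n" using a J by auto
    show "(V1 *\<^sub>v a) $ i = (a @\<^sub>v (?J *\<^sub>v a)) $ i"
    proof (cases "i < ?n")
      case True
      have "(V1 *\<^sub>v a) $ i = (\<Sum>j\<in>{0..<?n}. (if i = j then 1 else 0) * a $ j)"
        using i True a unfolding V1_def by (auto simp: scalar_prod_def)
      also have "\<dots> = (\<Sum>j\<in>{0..<?n}. if j = i then a $ j else 0)" by (rule sum.cong) auto
      also have "\<dots> = a $ i" using True by simp
      finally show ?thesis using True a J by simp
    next
      case False
      have "(V1 *\<^sub>v a) $ i = (\<Sum>j\<in>{0..<?n}. ?J $$ (i - ?n, j) * a $ j)"
        using i False a unfolding V1_def by (auto simp: scalar_prod_def)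
      also have "\<dots> = (?J *\<^sub>v a) $ (i - ?n)" using i False a J by (auto simp: scalar_prod_def)
      also have "\<dots> = (a @\<^sub>v (?J *\<^sub>v a)) $ i" by (subst index_append_vec) (use i False a J in auto)
      finally show ?thesis .
    qed
  qed (use V1 a J in auto)
  have V2a: "V2 *\<^sub>v a = a @\<^sub>v (- (?J *\<^sub>v a))" if a: "a \<in> carrier_vec ?n" for a
  proof (rule eq_vecI)
    fix i assume "i < dim_vec (a @\<^sub>v (- (?J *\<^sub>v a)))"
    hence i: "i < ?n + ?n" using a J by auto
    show "(V2 *\<^sub>v a) $ i = (a @\<^sub>v (- (?J *\<^sub>v a))) $ i"
    proof (cases "i < ?n")
      case True
      have "(V2 *\<^sub>v a) $ i = (\<Sum>j\<in>{0..<?n}. (if i = j then 1 else 0) * a $ j)"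
        using i True a unfolding V2_def by (auto simp: scalar_prod_def)
      also have "\<dots> = (\<Sum>j\<in>{0..<?n}. if j = i then a $ j else 0)" by (rule sum.cong) auto
      also have "\<dots> = a $ i" using True by simp
      finally show ?thesis using True a J by simp
    next
      case False
      have "(V2 *\<^sub>v a) $ i = (\<Sum>j\<in>{0..<?n}. - (?J $$ (i - ?n, j) * a $ j))"
        using i False a unfolding V2_def by (auto simp: scalar_prod_def)
      also have "\<dots> = - (?J *\<^sub>v a) $ (i - ?n)" using i False a J by (auto simp: scalar_prod_def sum_negf)
      also have "\<dots> = (a @\<^sub>v (- (?J *\<^sub>v a))) $ i" by (subst index_append_vec) (use i False a J in auto)
      finally show ?thesis .
    qed
  qed (use V2 a J in auto)
  have JJ: "?J *\<^sub>v (?J *\<^sub>v a) = - a" if a: "a \<in> carrier_vec ?n" for a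
  proof -
    have "?J *\<^sub>v (?J *\<^sub>v a) = (?J * ?J) *\<^sub>v a" by (rule assoc_mult_mat_vec[symmetric], insert J a, auto)
    also have "\<dots> = - a" unfolding J_sq using a by (subst uminus_mult_mat_vec) auto
    finally show ?thesis .
  qed
  have C0v: "C0_mat N *\<^sub>v (x @\<^sub>v y) = (?J *\<^sub>v y) @\<^sub>v (- (?J *\<^sub>v x))"
    if x: "x \<in> carrier_vec ?n" and y: "y \<in> carrier_vec ?n" for x y
  proof -
    have "C0_mat N *\<^sub>v (x @\<^sub>v y) = (0\<^sub>m ?n ?n *\<^sub>v x + ?J *\<^sub>v y) @\<^sub>v ((- ?J) *\<^sub>v x + 0\<^sub>m ?n ?n *\<^sub>v y)"
      unfolding C0_mat_def by (rule four_block_mat_mult_vec[OF _ J _ _ x y], insert J, auto)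
    also have "0\<^sub>m ?n ?n *\<^sub>v x + ?J *\<^sub>v y = ?J *\<^sub>v y" using J x y by (intro eq_vecI) auto
    also have "(- ?J) *\<^sub>v x + 0\<^sub>m ?n ?n *\<^sub>v y = - (?J *\<^sub>v x)" using J x y by (intro eq_vecI) auto
    finally show ?thesis .
  qed
  have "?n \<le> neg_index (C0_mat N)"
  proof (rule neg_index_neg_bound[OF C0 C0_sym V1])
    fix a :: "real vec" assume a: "a \<in> carrier_vec ?n" "a \<noteq> 0\<^sub>v ?n"
    have Ja: "?J *\<^sub>v a \<in> carrier_vec ?n" using J a by auto
    have "(V1 *\<^sub>v a) \<bullet> (C0_mat N *\<^sub>v (V1 *\<^sub>v a)) = (a @\<^sub>v (?J *\<^sub>v a)) \<bullet> ((- a) @\<^sub>v (- (?J *\<^sub>v a)))"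
      unfolding V1a[OF a(1)] C0v[OF a(1) Ja] JJ[OF a(1)] ..
    also have "\<dots> = - (a \<bullet> a) - (?J *\<^sub>v a) \<bullet> (?J *\<^sub>v a)"
      by (subst scalar_prod_append[of _ ?n _ ?n], insert a Ja, auto)
    also have "\<dots> < 0" using scalar_prod_self_pos[OF a] conjugate_square_ge_0_vec[of "?J *\<^sub>v a"] by simp
    finally show "(V1 *\<^sub>v a) \<bullet> (C0_mat N *\<^sub>v (V1 *\<^sub>v a)) < 0" .
  qed
  moreover have "neg_index (C0_mat N) + ?n \<le> ?n + ?n"
  proof (rule neg_index_pos_bound[OF C0 C0_sym V2])
    fix a :: "real vec" assume a: "a \<in> carrier_vec ?n" "a \<noteq> 0\<^sub>v ?n"
    have Ja: "- (?J *\<^sub>v a) \<in> carrier_vec ?n" using J a by auto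
    have JJ': "?J *\<^sub>v (- (?J *\<^sub>v a)) = a"
    proof -
      have "?J *\<^sub>v (- (?J *\<^sub>v a)) = - (?J *\<^sub>v (?J *\<^sub>v a))" using J a by (intro eq_vecI) auto
      thus ?thesis using JJ[OF a(1)] by simp
    qed
    have "(V2 *\<^sub>v a) \<bullet> (C0_mat N *\<^sub>v (V2 *\<^sub>v a)) = (a @\<^sub>v (- (?J *\<^sub>v a))) \<bullet> (a @\<^sub>v (- (?J *\<^sub>v a)))"
      unfolding V2a[OF a(1)] C0v[OF a(1) Ja] JJ' ..
    also have "\<dots> = a \<bullet> a + (- (?J *\<^sub>v a)) \<bullet> (- (?J *\<^sub>v a))"
      by (subst scalar_prod_append[of _ ?n _ ?n], insert a Ja, auto)
    also have "\<dots> > 0" using scalar_prod_self_pos[OF a] conjugate_square_ge_0_vec[of "- (?J *\<^sub>v a)"] by simp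
    finally show "(V2 *\<^sub>v a) \<bullet> (C0_mat N *\<^sub>v (V2 *\<^sub>v a)) > 0" .
  qed
  ultimately show ?thesis by simp
qed



lemma neg_index_smult:
  fixes M :: "real mat"
  assumes M: "M \<in> carrier_mat n n" and sym: "M\<^sup>T = M" and c: "c > 0"
  shows "neg_index (c \<cdot>\<^sub>m M) = neg_index M"
proof -
  from real_spectral[OF M sym] obtain U D where UD: "U \<in> carrier_mat n n" "U\<^sup>T * U = 1\<^sub>m n"
    "D \<in> carrier_mat n n" "diagonal_mat D" "M = U * D * U\<^sup>T" by auto
  have cD: "c \<cdot>\<^sub>m D \<in> carrier_mat n n" "diagonal_mat (c \<cdot>\<^sub>m D)" using UD(3,4) unfolding diagonal_mat_def by auto
  have "U * (c \<cdot>\<^sub>m D) * U\<^sup>T = c \<cdot>\<^sub>m (U * D) * U\<^sup>T" using UD(1,3) by (simp add: mult_smult_distrib)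
  also have "\<dots> = c \<cdot>\<^sub>m (U * D * U\<^sup>T)" by (rule mult_smult_assoc_mat, insert UD(1,3), auto)
  also have "\<dots> = c \<cdot>\<^sub>m M" unfolding UD(5) ..
  finally have cM: "c \<cdot>\<^sub>m M = U * (c \<cdot>\<^sub>m D) * U\<^sup>T" by simp
  have cMc: "c \<cdot>\<^sub>m M \<in> carrier_mat n n" using M by simp
  have "neg_index (c \<cdot>\<^sub>m M) = card {i. i < n \<and> (c \<cdot>\<^sub>m D) $$ (i,i) < 0}"
    by (rule neg_index_spectral[OF cMc UD(1,2) cD cM])
  also have "{i. i < n \<and> (c \<cdot>\<^sub>m D) $$ (i,i) < 0} = {i. i < n \<and> D $$ (i,i) < 0}"
    using UD(3) c by (auto simp: mult_less_0_iff)
  finally show ?thesis using neg_index_spectral[OF M UD] by simp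
qed

lemma card_double:
  fixes f :: "nat \<Rightarrow> bool"
  shows "card {i. i < n + n \<and> f (if i < n then i else i - n)} = 2 * card {i. i < n \<and> f i}"
proof -
  let ?X = "{i. i < n \<and> f i}"
  have "{i. i < n + n \<and> f (if i < n then i else i - n)} = ?X \<union> (\<lambda>i. i + n) ` ?X"
  proof (intro equalityI subsetI)
    fix i assume "i \<in> {i. i < n + n \<and> f (if i < n then i else i - n)}"
    thus "i \<in> ?X \<union> (\<lambda>i. i + n) ` ?X"
      by (cases "i < n") (auto intro!: image_eqI[of _ _ "i - n"])
  next
    fix i assume "i \<in> ?X \<union> (\<lambda>i. i + n) ` ?X"
    thus "i \<in> {i. i < n + n \<and> f (if i < n then i else i - n)}" by auto
  qed
  also have "card \<dots> = card ?X + card ((\<lambda>i. i + n) ` ?X)" by (rule card_Un_disjoint) auto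
  also have "card ((\<lambda>i. i + n) ` ?X) = card ?X" by (rule card_image) (auto simp: inj_on_def)
  finally show ?thesis by simp
qed

lemma neg_index_C1:
  assumes A: "A \<in> carrier_mat (N + N) (N + N)" and sym: "A\<^sup>T = A"
  shows "neg_index (C1_mat A N) = 2 * neg_index (- A)"
proof -
  let ?n = "N + N"
  have mA: "- A \<in> carrier_mat ?n ?n" using A by simp
  have msym: "(- A)\<^sup>T = - A" using sym by (simp add: transpose_uminus)
  from real_spectral[OF mA msym] obtain U D where UD: "U \<in> carrier_mat ?n ?n" "U\<^sup>T * U = 1\<^sub>m ?n"
    "D \<in> carrier_mat ?n ?n" "diagonal_mat D" "- A = U * D * U\<^sup>T" by auto
  define B where "B = four_block_mat U (0\<^sub>m ?n ?n) (0\<^sub>m ?n ?n) U"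
  define DD where "DD = four_block_mat D (0\<^sub>m ?n ?n) (0\<^sub>m ?n ?n) D"
  have B: "B \<in> carrier_mat (?n + ?n) (?n + ?n)" unfolding B_def using UD by auto
  have DD: "DD \<in> carrier_mat (?n + ?n) (?n + ?n)" unfolding DD_def using UD by auto
  have Bt: "B\<^sup>T = four_block_mat U\<^sup>T (0\<^sub>m ?n ?n) (0\<^sub>m ?n ?n) U\<^sup>T"
    unfolding B_def by (rule block_diag_transpose, insert UD, auto)
  have BB: "B\<^sup>T * B = 1\<^sub>m (?n + ?n)" unfolding Bt unfolding B_def
    by (subst block_diag_mult, insert UD, auto)
  have dDD: "diagonal_mat DD" using UD(3,4) unfolding DD_def diagonal_mat_def by auto
  have "B * DD * B\<^sup>T = four_block_mat (U * D * U\<^sup>T) (0\<^sub>m ?n ?n) (0\<^sub>m ?n ?n) (U * D * U\<^sup>T)"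
    unfolding Bt unfolding B_def DD_def
    by (subst block_diag_mult, insert UD, auto, subst block_diag_mult, auto)
  also have "\<dots> = C1_mat A N" unfolding C1_mat_def UD(5)[symmetric] ..
  finally have C1: "C1_mat A N = B * DD * B\<^sup>T" by simp
  have "neg_index (C1_mat A N) = card {i. i < ?n + ?n \<and> DD $$ (i,i) < 0}"
    by (rule neg_index_spectral[OF C1_carrier[OF A] B BB DD dDD C1])
  also have "{i. i < ?n + ?n \<and> DD $$ (i,i) < 0} = {i. i < ?n + ?n \<and> (\<lambda>i. D $$ (i,i) < 0) (if i < ?n then i else i - ?n)}"
    unfolding DD_def using UD(3) by auto
  also have "card \<dots> = 2 * card {i. i < ?n \<and> D $$ (i,i) < 0}" by (rule card_double)
  finally show ?thesis using neg_index_spectral[OF mA UD] by simp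
qed



lemma no_eig:
  fixes B :: "real mat" and x :: "real vec" and c :: real
  assumes B: "B \<in> carrier_mat n n" and x: "x \<in> carrier_vec n" "x \<noteq> 0\<^sub>v n"
    and BB: "B *\<^sub>v (B *\<^sub>v x) = (- (c * c)) \<cdot>\<^sub>v x"
  shows "eigenvalue (map_mat complex_of_real B) (\<i> * c) \<or> eigenvalue (map_mat complex_of_real B) (- (\<i> * c))"
proof -
  define Bc where "Bc = map_mat complex_of_real B"
  define xc where "xc = map_vec complex_of_real x"
  have Bc: "Bc \<in> carrier_mat n n" unfolding Bc_def using B by auto
  have xc: "xc \<in> carrier_vec n" unfolding xc_def using x by auto
  have xc0: "xc \<noteq> 0\<^sub>v n" unfolding xc_def using x(2) of_real_hom.vec_hom_zero_iff by metis
  have Bx: "Bc *\<^sub>v xc = map_vec complex_of_real (B *\<^sub>v x)" unfolding Bc_def xc_def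
    by (rule of_real_hom.mult_mat_vec_hom[symmetric, OF B x(1)])
  have "Bc *\<^sub>v (Bc *\<^sub>v xc) = map_vec complex_of_real (B *\<^sub>v (B *\<^sub>v x))" unfolding Bx
    unfolding Bc_def by (rule of_real_hom.mult_mat_vec_hom[symmetric, OF B], insert B x, auto)
  also have "\<dots> = complex_of_real (- (c * c)) \<cdot>\<^sub>v xc" unfolding BB xc_def by (rule of_real_hom.vec_hom_smult)
  finally have BBc: "Bc *\<^sub>v (Bc *\<^sub>v xc) = complex_of_real (- (c * c)) \<cdot>\<^sub>v xc" .
  define w where "w = Bc *\<^sub>v xc + (\<i> * c) \<cdot>\<^sub>v xc"
  have w: "w \<in> carrier_vec n" unfolding w_def using Bc xc by auto
  show ?thesis
  proof (cases "w = 0\<^sub>v n")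
    case True
    have "Bc *\<^sub>v xc = (- (\<i> * c)) \<cdot>\<^sub>v xc"
    proof (rule eq_vecI)
      fix i assume "i < dim_vec ((- (\<i> * c)) \<cdot>\<^sub>v xc)"
      hence i: "i < n" using xc by auto
      have "w $ i = 0" using True i by simp
      hence "(Bc *\<^sub>v xc) $ i + (\<i> * c) * xc $ i = 0" unfolding w_def using i Bc xc by simp
      thus "(Bc *\<^sub>v xc) $ i = ((- (\<i> * c)) \<cdot>\<^sub>v xc) $ i" using i xc by (simp add: eq_neg_iff_add_eq_0)
    qed (use Bc xc in auto)
    hence "eigenvalue Bc (- (\<i> * c))" unfolding eigenvalue_def eigenvector_def using Bc xc xc0 by auto
    thus ?thesis unfolding Bc_def by simp
  next
    case False
    have "Bc *\<^sub>v w = (\<i> * c) \<cdot>\<^sub>v w"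
    proof (rule eq_vecI)
      fix i assume "i < dim_vec ((\<i> * c) \<cdot>\<^sub>v w)"
      hence i: "i < n" using w by auto
      have "Bc *\<^sub>v w = Bc *\<^sub>v (Bc *\<^sub>v xc) + Bc *\<^sub>v ((\<i> * c) \<cdot>\<^sub>v xc)" unfolding w_def
        by (rule mult_add_distrib_mat_vec, insert Bc xc, auto)
      also have "Bc *\<^sub>v ((\<i> * c) \<cdot>\<^sub>v xc) = (\<i> * c) \<cdot>\<^sub>v (Bc *\<^sub>v xc)" by (rule mult_mat_vec, insert Bc xc, auto)
      finally have "(Bc *\<^sub>v w) $ i = - (complex_of_real c * complex_of_real c) * xc $ i + (\<i> * c) * (Bc *\<^sub>v xc) $ i"
        unfolding BBc using i Bc xc by simp
      also have "\<dots> = (\<i> * c) * ((Bc *\<^sub>v xc) $ i + (\<i> * c) * xc $ i)"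
        by (simp add: algebra_simps)
      also have "\<dots> = ((\<i> * c) \<cdot>\<^sub>v w) $ i" unfolding w_def using i Bc xc by simp
      finally show "(Bc *\<^sub>v w) $ i = ((\<i> * c) \<cdot>\<^sub>v w) $ i" .
    qed (use Bc w in auto)
    hence "eigenvalue Bc (\<i> * c)" unfolding eigenvalue_def eigenvector_def using Bc w False by auto
    thus ?thesis unfolding Bc_def by simp
  qed
qed


lemma smA_vec:
  fixes A :: "real mat"
  assumes A: "A \<in> carrier_mat n n" and v: "v \<in> carrier_vec n"
  shows "(- (l \<cdot>\<^sub>m A)) *\<^sub>v v = (- l) \<cdot>\<^sub>v (A *\<^sub>v v)"
  using A v by (intro eq_vecI) (auto simp: scalar_prod_def sum_distrib_left sum_negf mult_ac)

lemma neg_smult_vec: "v \<in> carrier_vec n \<Longrightarrow> - (k \<cdot>\<^sub>v v) = (- k) \<cdot>\<^sub>v (v :: real vec)"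
  by (intro eq_vecI) auto

lemma mat_vec_uminus:
  fixes A :: "real mat"
  shows "A \<in> carrier_mat n m \<Longrightarrow> v \<in> carrier_vec m \<Longrightarrow> A *\<^sub>v (- v) = - (A *\<^sub>v v)"
  by (intro eq_vecI) auto

lemma JJ_vec: "v \<in> carrier_vec (N + N) \<Longrightarrow> J_mat N *\<^sub>v (J_mat N *\<^sub>v v) = - (v :: real vec)"
proof -
  assume v: "v \<in> carrier_vec (N + N)"
  have "J_mat N *\<^sub>v (J_mat N *\<^sub>v v) = (J_mat N * J_mat N) *\<^sub>v v"
    by (rule assoc_mult_mat_vec[symmetric], insert J_carrier[of N] v, auto)
  also have "\<dots> = - v" unfolding J_sq using v by (subst uminus_mult_mat_vec) auto
  finally show ?thesis .
qed

lemma T1_nonsing: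
  fixes A :: "real mat" and \<beta>0 l :: real
  assumes A: "A \<in> carrier_mat (N + N) (N + N)"
    and spec: "spectrum (map_mat complex_of_real (J_mat N * A)) = {\<beta>0 * \<i>, - (\<beta>0 * \<i>)}"
    and \<beta>: "\<beta>0 > 0" and l: "l \<ge> 0" "l \<noteq> 1 / \<beta>0"
  shows "det (T1 N (l \<cdot>\<^sub>m A)) \<noteq> 0"
proof
  let ?n = "N + N"
  let ?J = "J_mat N"
  have J: "?J \<in> carrier_mat ?n ?n" by (rule J_carrier)
  have lA: "- (l \<cdot>\<^sub>m A) \<in> carrier_mat ?n ?n" using A by auto
  have T: "T1 N (l \<cdot>\<^sub>m A) \<in> carrier_mat (?n + ?n) (?n + ?n)" unfolding T1_def using A J by auto
  assume "det (T1 N (l \<cdot>\<^sub>m A)) = 0"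
  from this[unfolded det_0_iff_vec_prod_zero_field[OF T]] obtain z where
    z: "z \<in> carrier_vec (?n + ?n)" "z \<noteq> 0\<^sub>v (?n + ?n)" "T1 N (l \<cdot>\<^sub>m A) *\<^sub>v z = 0\<^sub>v (?n + ?n)" by auto
  define x where "x = vec_first z ?n"
  define y where "y = vec_last z ?n"
  have x: "x \<in> carrier_vec ?n" and y: "y \<in> carrier_vec ?n" unfolding x_def y_def by auto
  have zxy: "z = x @\<^sub>v y" unfolding x_def y_def using vec_first_last_append[OF z(1)] by simp
  have Tz: "T1 N (l \<cdot>\<^sub>m A) *\<^sub>v z = ((- (l \<cdot>\<^sub>m A)) *\<^sub>v x + ?J *\<^sub>v y) @\<^sub>v ((- ?J) *\<^sub>v x + (- (l \<cdot>\<^sub>m A)) *\<^sub>v y)"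
    unfolding T1_def zxy by (rule four_block_mat_mult_vec[OF lA J _ lA x y], insert J, auto)
  have z0: "0\<^sub>v (?n + ?n) = 0\<^sub>v ?n @\<^sub>v (0\<^sub>v ?n :: real vec)" by (rule eq_vecI) auto
  have "((- (l \<cdot>\<^sub>m A)) *\<^sub>v x + ?J *\<^sub>v y) @\<^sub>v ((- ?J) *\<^sub>v x + (- (l \<cdot>\<^sub>m A)) *\<^sub>v y) = T1 N (l \<cdot>\<^sub>m A) *\<^sub>v z"
    by (rule Tz[symmetric])
  also have "\<dots> = 0\<^sub>v (?n + ?n)" by (rule z(3))
  also have "\<dots> = 0\<^sub>v ?n @\<^sub>v 0\<^sub>v ?n" by (rule z0)
  finally have eq: "((- (l \<cdot>\<^sub>m A)) *\<^sub>v x + ?J *\<^sub>v y) @\<^sub>v ((- ?J) *\<^sub>v x + (- (l \<cdot>\<^sub>m A)) *\<^sub>v y) = 0\<^sub>v ?n @\<^sub>v 0\<^sub>v ?n" .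
  have c1: "(- (l \<cdot>\<^sub>m A)) *\<^sub>v x + ?J *\<^sub>v y \<in> carrier_vec ?n"
    by (rule add_carrier_vec; rule mult_mat_vec_carrier, insert lA J x y, auto)
  from eq have E1: "(- (l \<cdot>\<^sub>m A)) *\<^sub>v x + ?J *\<^sub>v y = 0\<^sub>v ?n" and E2: "(- ?J) *\<^sub>v x + (- (l \<cdot>\<^sub>m A)) *\<^sub>v y = 0\<^sub>v ?n"
    using append_vec_eq[OF c1 zero_carrier_vec[of ?n]] by auto
  have Ax: "A *\<^sub>v x \<in> carrier_vec ?n" using A x by auto
  have Ay: "A *\<^sub>v y \<in> carrier_vec ?n" using A y by auto
  from E1 have "(- l) \<cdot>\<^sub>v (A *\<^sub>v x) + ?J *\<^sub>v y = 0\<^sub>v ?n" unfolding smA_vec[OF A x] .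
  from vec_add_zero_eq[OF _ _ this] have Jy: "?J *\<^sub>v y = l \<cdot>\<^sub>v (A *\<^sub>v x)"
    using Ax J y neg_smult_vec[OF Ax, of "- l"] by auto
  have yeq: "y = - (l \<cdot>\<^sub>v (?J *\<^sub>v (A *\<^sub>v x)))"
  proof -
    have "y = - (?J *\<^sub>v (?J *\<^sub>v y))" using JJ_vec[OF y] y by simp
    also have "?J *\<^sub>v (?J *\<^sub>v y) = l \<cdot>\<^sub>v (?J *\<^sub>v (A *\<^sub>v x))" unfolding Jy
      by (rule mult_mat_vec[OF J Ax])
    finally show ?thesis .
  qed
  define Bx where "Bx = ?J *\<^sub>v (A *\<^sub>v x)"
  have Bxc: "Bx \<in> carrier_vec ?n" unfolding Bx_def using J Ax by auto
  have ABx: "A *\<^sub>v Bx \<in> carrier_vec ?n" using A Bxc by auto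
  have Jx: "?J *\<^sub>v x \<in> carrier_vec ?n" using J x by auto
  from E2 have "- (?J *\<^sub>v x) + (- l) \<cdot>\<^sub>v (A *\<^sub>v y) = 0\<^sub>v ?n"
    unfolding smA_vec[OF A y] using uminus_mult_mat_vec[of x ?J] J x by simp
  from vec_add_zero_eq[OF _ _ this] have "(- l) \<cdot>\<^sub>v (A *\<^sub>v y) = - (- (?J *\<^sub>v x))"
    using Jx Ay by auto
  hence Jxeq: "?J *\<^sub>v x = (- l) \<cdot>\<^sub>v (A *\<^sub>v y)" using Jx by simp
  have Ay2: "A *\<^sub>v y = - (l \<cdot>\<^sub>v (A *\<^sub>v Bx))" unfolding yeq Bx_def[symmetric]
    using mat_vec_uminus[OF A, of "l \<cdot>\<^sub>v Bx"] mult_mat_vec[OF A Bxc, of l] Bxc by simp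
  have Jx2: "?J *\<^sub>v x = (l * l) \<cdot>\<^sub>v (A *\<^sub>v Bx)" unfolding Jxeq Ay2
    by (intro eq_vecI) (use ABx in auto)
  have BBx: "- x = (l * l) \<cdot>\<^sub>v (?J *\<^sub>v (A *\<^sub>v Bx))"
  proof -
    have "- x = ?J *\<^sub>v (?J *\<^sub>v x)" using JJ_vec[OF x] by simp
    also have "\<dots> = (l * l) \<cdot>\<^sub>v (?J *\<^sub>v (A *\<^sub>v Bx))" unfolding Jx2 by (rule mult_mat_vec[OF J ABx])
    finally show ?thesis .
  qed
  have x0: "x \<noteq> 0\<^sub>v ?n"
  proof
    assume x0: "x = 0\<^sub>v ?n"
    hence "A *\<^sub>v x = 0\<^sub>v ?n" using A by (intro eq_vecI) (auto simp: scalar_prod_def)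
    hence "?J *\<^sub>v (A *\<^sub>v x) = 0\<^sub>v ?n" using J by (intro eq_vecI) (auto simp: scalar_prod_def)
    hence "y = 0\<^sub>v ?n" unfolding yeq by (intro eq_vecI) auto
    hence "z = 0\<^sub>v (?n + ?n)" unfolding zxy using x0 by (intro eq_vecI) auto
    thus False using z(2) by simp
  qed
  have lpos: "l > 0"
  proof (rule ccontr)
    assume "\<not> l > 0"
    hence "l = 0" using l(1) by simp
    hence "- x = 0\<^sub>v ?n" using BBx J ABx by (intro eq_vecI) auto
    hence "x = 0\<^sub>v ?n" using x by (metis uminus_uminus_vec uminus_zero_vec_eq)
    thus False using x0 by simp
  qed
  define c where "c = 1 / l"
  have c: "c > 0" unfolding c_def using lpos by simp
  have B: "?J * A \<in> carrier_mat ?n ?n" using J A by auto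
  have Bv: "(?J * A) *\<^sub>v v = ?J *\<^sub>v (A *\<^sub>v v)" if "v \<in> carrier_vec ?n" for v
    by (rule assoc_mult_mat_vec, insert J A that, auto)
  have "(?J * A) *\<^sub>v ((?J * A) *\<^sub>v x) = (- (c * c)) \<cdot>\<^sub>v x"
  proof -
    have "(?J * A) *\<^sub>v ((?J * A) *\<^sub>v x) = ?J *\<^sub>v (A *\<^sub>v Bx)" unfolding Bv[OF x] Bx_def[symmetric]
      using Bv[OF Bxc] .
    also have "\<dots> = (c * c) \<cdot>\<^sub>v ((l * l) \<cdot>\<^sub>v (?J *\<^sub>v (A *\<^sub>v Bx)))"
      unfolding smult_smult_assoc c_def using lpos by simp
    also have "\<dots> = (c * c) \<cdot>\<^sub>v (- x)" unfolding BBx ..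
    also have "\<dots> = (- (c * c)) \<cdot>\<^sub>v x" using x by (intro eq_vecI) auto
    finally show ?thesis .
  qed
  from no_eig[OF B x x0 this]
  have "\<i> * c \<in> spectrum (map_mat complex_of_real (?J * A)) \<or> - (\<i> * c) \<in> spectrum (map_mat complex_of_real (?J * A))"
    unfolding spectrum_def by auto
  hence "\<i> * c = \<beta>0 * \<i> \<or> \<i> * c = - (\<beta>0 * \<i>) \<or> - (\<i> * c) = \<beta>0 * \<i> \<or> - (\<i> * c) = - (\<beta>0 * \<i>)"
    unfolding spec by auto
  hence "c = \<beta>0 \<or> c = - \<beta>0" by (auto simp: complex_eq_iff)
  hence "c = \<beta>0" using c \<beta> by auto
  hence "l = 1 / \<beta>0" unfolding c_def using lpos \<beta> by (simp add: field_simps)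
  thus False using l(2) by simp
qed



lemma det_A_nonzero:
  fixes A :: "real mat" and \<beta>0 :: real
  assumes A: "A \<in> carrier_mat (N + N) (N + N)"
    and spec: "spectrum (map_mat complex_of_real (J_mat N * A)) = {\<beta>0 * \<i>, - (\<beta>0 * \<i>)}"
    and \<beta>: "\<beta>0 > 0"
  shows "det A \<noteq> 0"
proof
  assume "det A = 0"
  from this[unfolded det_0_iff_vec_prod_zero_field[OF A]] obtain v where
    v: "v \<in> carrier_vec (N + N)" "v \<noteq> 0\<^sub>v (N + N)" "A *\<^sub>v v = 0\<^sub>v (N + N)" by auto
  have B: "J_mat N * A \<in> carrier_mat (N + N) (N + N)" using J_carrier[of N] A by auto
  have "(J_mat N * A) *\<^sub>v v = J_mat N *\<^sub>v (A *\<^sub>v v)" by (rule assoc_mult_mat_vec, insert J_carrier[of N] A v, auto)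
  also have "\<dots> = 0 \<cdot>\<^sub>v v" unfolding v(3) using J_carrier[of N] v by (intro eq_vecI) (auto simp: scalar_prod_def)
  finally have "eigenvalue (J_mat N * A) 0" unfolding eigenvalue_def eigenvector_def using v B J_carrier[of N] by auto
  from of_real_hom.eigenvalue_hom[OF B this]
  have "0 \<in> spectrum (map_mat complex_of_real (J_mat N * A))" unfolding spectrum_def by simp
  thus False unfolding spec using \<beta> by (auto simp: complex_eq_iff)
qed

lemma det_neg_nonzero:
  fixes A :: "real mat"
  assumes A: "A \<in> carrier_mat n n" and d: "det A \<noteq> 0"
  shows "det (- A) \<noteq> 0"
proof
  have mA: "- A \<in> carrier_mat n n" using A by simp
  assume "det (- A) = 0"
  from this[unfolded det_0_iff_vec_prod_zero_field[OF mA]] obtain v where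
    v: "v \<in> carrier_vec n" "v \<noteq> 0\<^sub>v n" "(- A) *\<^sub>v v = 0\<^sub>v n" by auto
  have "(- A) *\<^sub>v v = - (A *\<^sub>v v)" by (rule uminus_mult_mat_vec) (use A v in auto)
  hence "- (A *\<^sub>v v) = 0\<^sub>v n" using v(3) by simp
  hence "- (- (A *\<^sub>v v)) = 0\<^sub>v n" by simp
  hence "A *\<^sub>v v = 0\<^sub>v n" by simp
  hence "det A = 0" using det_0_iff_vec_prod_zero_field[OF A] v by auto
  thus False using d by simp
qed

theorem lemma4p2:
  fixes A :: "real mat" and N :: nat and \<beta>\<^sub>0 :: real
  assumes "A \<in> carrier_mat (2 * N) (2 * N)"
    and "transpose_mat A = A"
    and "\<beta>\<^sub>0 > 0"
    and "spectrum (map_mat complex_of_real (J_mat N * A)) = {\<beta>\<^sub>0 * \<i>, - (\<beta>\<^sub>0 * \<i>)}"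
  shows "(\<forall>l::real. 0 \<le> l \<and> l < 1 / \<beta>\<^sub>0 \<longrightarrow> neg_index (T1 N (l \<cdot>\<^sub>m A)) = 2 * N)
       \<and> (\<forall>l::real. l > 1 / \<beta>\<^sub>0 \<longrightarrow> neg_index (T1 N (l \<cdot>\<^sub>m A)) = 2 * neg_index (- A))"
proof -
  have A: "A \<in> carrier_mat (N + N) (N + N)" using assms(1) by (simp add: mult_2)
  note sym = assms(2) and \<beta> = assms(3) and spec = assms(4)
  let ?C0 = "C0_mat N" and ?C1 = "C1_mat A N" and ?m = "(N + N) + (N + N)"
  have C0: "?C0 \<in> carrier_mat ?m ?m" by (rule C0_carrier)
  have C1: "?C1 \<in> carrier_mat ?m ?m" by (rule C1_carrier[OF A])
  have s0: "?C0\<^sup>T = ?C0" by (rule C0_sym)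
  have s1: "?C1\<^sup>T = ?C1" by (rule C1_sym[OF A sym])
  have nd: "det (?C0 + t \<cdot>\<^sub>m ?C1) \<noteq> 0" if "t \<ge> 0" "t \<noteq> 1 / \<beta>\<^sub>0" for t
    using T1_nonsing[OF A spec \<beta> that] unfolding T1_decomp[OF A] .
  have part1: "neg_index (T1 N (l \<cdot>\<^sub>m A)) = 2 * N" if l: "0 \<le> l" "l < 1 / \<beta>\<^sub>0" for l
  proof -
    have "neg_index (T1 N (l \<cdot>\<^sub>m A)) = neg_index (?C0 + l \<cdot>\<^sub>m ?C1)" unfolding T1_decomp[OF A] ..
    also have "\<dots> = neg_index (?C0 + 0 \<cdot>\<^sub>m ?C1)"
      by (rule neg_index_affine_const[OF C0 C1 s0 s1 _, of 0 "1 / \<beta>\<^sub>0"], insert nd l, auto)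
    also have "?C0 + 0 \<cdot>\<^sub>m ?C1 = ?C0" using C0 C1 by (intro eq_matI) auto
    also have "neg_index ?C0 = 2 * N" by (simp add: neg_index_C0)
    finally show ?thesis .
  qed
  have nd2: "det (?C1 + t \<cdot>\<^sub>m ?C0) \<noteq> 0" if t: "t \<in> {0..<\<beta>\<^sub>0}" for t
  proof (cases "t = 0")
    case True
    have "?C1 + t \<cdot>\<^sub>m ?C0 = ?C1" using C0 C1 True by (intro eq_matI) auto
    also have "det ?C1 = det (- A) * det (- A)" unfolding C1_mat_def
      by (rule det_four_block_mat_lower_left_zero, insert A, auto)
    also have "\<dots> \<noteq> 0" using det_neg_nonzero[OF A det_A_nonzero[OF A spec \<beta>]] by simp
    finally show ?thesis .
  next
    case False
    hence tpos: "t > 0" using t by simp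
    have "?C1 + t \<cdot>\<^sub>m ?C0 = t \<cdot>\<^sub>m (?C0 + (1 / t) \<cdot>\<^sub>m ?C1)" using C0 C1 tpos
      by (intro eq_matI) (auto simp: field_simps)
    hence "det (?C1 + t \<cdot>\<^sub>m ?C0) = t ^ ?m * det (?C0 + (1 / t) \<cdot>\<^sub>m ?C1)" using C0 C1 by simp
    moreover have "det (?C0 + (1 / t) \<cdot>\<^sub>m ?C1) \<noteq> 0"
    proof (rule nd)
      show "0 \<le> 1 / t" using tpos by simp
      have "1 / t > 1 / \<beta>\<^sub>0" using tpos t by (simp add: frac_less2)
      thus "1 / t \<noteq> 1 / \<beta>\<^sub>0" by linarith
    qed
    ultimately show ?thesis using tpos by simp
  qed
  have part2: "neg_index (T1 N (l \<cdot>\<^sub>m A)) = 2 * neg_index (- A)" if l: "l > 1 / \<beta>\<^sub>0" for l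
  proof -
    have lpos: "l > 0" using l \<beta> by (smt (verit) divide_pos_pos)
    define \<mu> where "\<mu> = 1 / l"
    have \<mu>: "\<mu> \<in> {0..<\<beta>\<^sub>0}" unfolding \<mu>_def using l lpos \<beta>
      by (auto simp: field_simps)
    have X: "?C1 + \<mu> \<cdot>\<^sub>m ?C0 \<in> carrier_mat ?m ?m" using C0 C1 by auto
    have sX: "(?C1 + \<mu> \<cdot>\<^sub>m ?C0)\<^sup>T = ?C1 + \<mu> \<cdot>\<^sub>m ?C0"
      using C0 C1 s0 s1 by (intro eq_matI) (auto, metis index_transpose_mat(1) carrier_matD)
    have "T1 N (l \<cdot>\<^sub>m A) = ?C0 + l \<cdot>\<^sub>m ?C1" by (rule T1_decomp[OF A])
    also have "\<dots> = l \<cdot>\<^sub>m (?C1 + \<mu> \<cdot>\<^sub>m ?C0)" using C0 C1 lpos unfolding \<mu>_def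
      by (intro eq_matI) (auto simp: field_simps)
    finally have "neg_index (T1 N (l \<cdot>\<^sub>m A)) = neg_index (?C1 + \<mu> \<cdot>\<^sub>m ?C0)"
      using neg_index_smult[OF X sX lpos] by simp
    also have "\<dots> = neg_index (?C1 + 0 \<cdot>\<^sub>m ?C0)"
      by (rule neg_index_affine_const[OF C1 C0 s1 s0 nd2 \<mu>])
    also have "?C1 + 0 \<cdot>\<^sub>m ?C0 = ?C1" using C0 C1 by (intro eq_matI) auto
    also have "neg_index ?C1 = 2 * neg_index (- A)" by (rule neg_index_C1[OF A sym])
    finally show ?thesis .
  qed
  show ?thesis using part1 part2 by auto
qed


end
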